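(* Let $\alpha\in(0,1/2]$, let $X_1,X_2$ be i.i.d. Gamma$(\alpha)$ random variables, $Y_i=X_i-\alpha$, and let $d_1,d_2\geq0$ with $d_1\neq d_2$. Let $f_U$ be the density of $U=d_1Y_1+d_2Y_2$ and $f_V$ the density of $V=\sqrt{\tfrac12(d_1^2+d_2^2)}(Y_1+Y_2)$. Then there exist points $x_0<x_1<x_2$ such that $f_V-f_U$ is strictly positive on $\big(-\alpha\sqrt{2(d_1^2+d_2^2)},x_0\big)\cup(x_1,x_2)$ and strictly negative on $(x_0,x_1)\cup(x_2,\infty)$. Moreover, $x_0=-\alpha(d_1+d_2)$.
   Context: Gamma$(\alpha)$ denotes the distribution with density $\Gamma(\alpha)^{-1}x^{\alpha-1}e^{-x}$ on $(0,\infty)$. *)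

theory Defs
  imports "HOL-Analysis.Analysis"
begin

definition gamma_dens :: "real \<Rightarrow> real \<Rightarrow> real" where
  "gamma_dens a x = (if 0 < x then x powr (a - 1) * exp (- x) / Gamma a else 0)"

definition scaled_centered_dens :: "real \<Rightarrow> real \<Rightarrow> real \<Rightarrow> real" where
  "scaled_centered_dens a d x = gamma_dens a (x / d + a) / d"

definition conv_dens :: "(real \<Rightarrow> real) \<Rightarrow> (real \<Rightarrow> real) \<Rightarrow> real \<Rightarrow> real" where
  "conv_dens f g x = (LINT t|lborel. f t * g (x - t))"

definition lincomb_dens :: "real \<Rightarrow> real \<Rightarrow> real \<Rightarrow> real \<Rightarrow> real" where
  "lincomb_dens a d1 d2 =
     (if d1 = 0 then scaled_centered_dens a d2
      else if d2 = 0 then scaled_centered_dens a d1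
      else conv_dens (scaled_centered_dens a d1) (scaled_centered_dens a d2))"

end

theory Submission
  imports Defs
begin

lemma gd_meas[measurable]: "gamma_dens a \<in> borel_measurable borel"
  unfolding gamma_dens_def by measurable
lemma scd_meas[measurable]: "scaled_centered_dens a d \<in> borel_measurable borel"
  unfolding scaled_centered_dens_def by measurable

lemma powr_shift1: "(t::real) > 0 \<Longrightarrow> t powr (b+1) = t * t powr b"
  by (simp add: powr_add)

lemma gamma_dens_nonneg: "a > 0 \<Longrightarrow> 0 \<le> gamma_dens a x"
  unfolding gamma_dens_def by auto

lemma scd_nonneg: "a > 0 \<Longrightarrow> d > 0 \<Longrightarrow> 0 \<le> scaled_centered_dens a d x"
  unfolding scaled_centered_dens_def by (intro divide_nonneg_pos gamma_dens_nonneg) auto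

lemma gamma_has_int:
  assumes a: "a > 0"
  shows "((\<lambda>u. (p*u+q) * gamma_dens a u) has_integral (p*a+q)) UNIV"
proof -
  have G1: "((\<lambda>t. t powr (a-1)/exp t) has_integral Gamma a) {0..}"
    using Gamma_integral_real[OF a] .
  have G2: "((\<lambda>t. t powr ((a+1)-1)/exp t) has_integral Gamma (a+1)) {0..}"
    using Gamma_integral_real[of "a+1"] a by simp
  have GP: "Gamma (a+1) = a * Gamma a"
    by (rule Gamma_plus1) (use a nonpos_Ints_nonpos in force)
  have Gpos: "Gamma a > 0" using a by simp
  have "((\<lambda>t. (p * (t powr ((a+1)-1)/exp t) + q * (t powr (a-1)/exp t)) / Gamma a) has_integral
      (p * Gamma (a+1) + q * Gamma a) / Gamma a) {0..}"
    by (intro has_integral_divide has_integral_add has_integral_mult_right G1 G2)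
  also have "(p * Gamma (a+1) + q * Gamma a) / Gamma a = p*a+q"
    using Gpos GP by (simp add: field_simps)
  finally have H: "((\<lambda>t. (p * (t powr ((a+1)-1)/exp t) + q * (t powr (a-1)/exp t)) / Gamma a) has_integral
      (p*a+q)) {0..}" .
  have H2: "((\<lambda>u. (p*u+q) * gamma_dens a u) has_integral (p*a+q)) {0..}"
  proof (rule has_integral_eq[OF _ H])
    fix t :: real assume "t \<in> {0..}"
    then have "t = 0 \<or> t > 0" by auto
    then show "(p * (t powr ((a+1)-1)/exp t) + q * (t powr (a-1)/exp t)) / Gamma a = (p*t+q) * gamma_dens a t"
    proof
      assume "t = 0" then show ?thesis by (simp add: gamma_dens_def)
    next
      assume t: "t > 0"
      have "t powr ((a+1)-1) = t * t powr (a-1)"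
        using powr_shift1[OF t, of "a-1"] by simp
      then show ?thesis using t by (simp add: gamma_dens_def field_simps exp_minus)
    qed
  qed
  show ?thesis
    by (rule has_integral_on_superset[OF H2]) (auto simp: gamma_dens_def)
qed

lemma gamma_nn:
  assumes a: "a > 0" and p: "p \<ge> 0" and q: "q \<ge> 0"
  shows "(\<integral>\<^sup>+u. ennreal ((p*u+q) * gamma_dens a u) \<partial>lborel) = ennreal (p*a+q)"
proof -
  have "integral\<^sup>N lborel (\<lambda>u. (p*u+q) * gamma_dens a u) = p*a+q"
  proof (rule nn_integral_has_integral_lborel)
    show "(\<lambda>u. (p*u+q) * gamma_dens a u) \<in> borel_measurable borel" by measurable
    show "0 \<le> (p*u+q) * gamma_dens a u" for u
      using p q a by (cases "u > 0") (auto simp: gamma_dens_def)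
    show "((\<lambda>u. (p*u+q) * gamma_dens a u) has_integral (p*a+q)) UNIV" by (rule gamma_has_int[OF a])
  qed
  then show ?thesis by simp
qed

lemma scd_moment:
  assumes a: "a > 0" and d: "d > 0" and b: "b \<ge> a*d"
  shows "(\<integral>\<^sup>+y. ennreal ((y+b) * scaled_centered_dens a d y) \<partial>lborel) = ennreal b"
proof -
  have "(\<integral>\<^sup>+y. ennreal ((y+b) * scaled_centered_dens a d y) \<partial>lborel) =
      ennreal d * (\<integral>\<^sup>+u. ennreal ((-a*d + d*u + b) * scaled_centered_dens a d (-a*d + d*u)) \<partial>lborel)"
    using nn_integral_real_affine[of "\<lambda>y. ennreal ((y+b) * scaled_centered_dens a d y)" d "-a*d"] d
    by simp
  also have "\<dots> = (\<integral>\<^sup>+u. ennreal d * ennreal ((-a*d + d*u + b) * scaled_centered_dens a d (-a*d + d*u)) \<partial>lborel)"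
    by (rule nn_integral_cmult[symmetric]) measurable
  also have "\<dots> = (\<integral>\<^sup>+u. ennreal ((d*u + (b - a*d)) * gamma_dens a u) \<partial>lborel)"
  proof (intro nn_integral_cong)
    fix u :: real
    have e: "(-a*d + d*u)/d + a = u" using d by (simp add: field_simps)
    have r: "d * ((-a*d + d*u + b) * scaled_centered_dens a d (-a*d + d*u)) =
        (d*u + (b - a*d)) * gamma_dens a u"
      using d by (simp add: scaled_centered_dens_def e field_simps)
    show "ennreal d * ennreal ((-a*d + d*u + b) * scaled_centered_dens a d (-a*d + d*u)) =
        ennreal ((d*u + (b - a*d)) * gamma_dens a u)"
      by (metis ennreal_mult' less_imp_le d r)
  qed
  also have "\<dots> = ennreal (d*a + (b - a*d))"
    by (rule gamma_nn) (use a d b in auto)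
  finally show ?thesis by simp
qed

definition phi :: "real \<Rightarrow> real \<Rightarrow> real" where
  "phi a w = w powr (a-1) * (1-w) powr (a-1)"
definition ell :: "real \<Rightarrow> real \<Rightarrow> real \<Rightarrow> real" where
  "ell d1 d2 w = w/d1 + (1-w)/d2"
definition Kf :: "real \<Rightarrow> real \<Rightarrow> real \<Rightarrow> real \<Rightarrow> real" where
  "Kf a d1 d2 s = integral {0<..<1} (\<lambda>w. phi a w * exp (-(s * ell d1 d2 w)))"

lemma phi_int: "a > 0 \<Longrightarrow> (phi a has_integral Beta a a) {0<..<1}"
  unfolding phi_def using has_integral_Beta_real[of a a] by (simp add: has_integral_Icc_iff_Ioo)

lemma phi_nonneg: "0 \<le> phi a w" by (simp add: phi_def)

lemma K_integrable:
  assumes a: "a > 0" and d1: "d1 > 0" and d2: "d2 > 0" and s: "s \<ge> 0"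
  shows "(\<lambda>w. phi a w * exp (-(s * ell d1 d2 w))) integrable_on {0<..<1}"
proof (rule measurable_bounded_by_integrable_imp_integrable_real)
  show "(\<lambda>w. phi a w * exp (-(s * ell d1 d2 w))) \<in> borel_measurable (lebesgue_on {0<..<1})"
    using d1 d2 by (intro continuous_imp_measurable_on_sets_lebesgue)
       (auto simp: phi_def ell_def intro!: continuous_intros)
  show "phi a integrable_on {0<..<1}" using phi_int[OF a] by blast
  show "\<bar>phi a w * exp (-(s * ell d1 d2 w))\<bar> \<le> phi a w" if "w \<in> {0<..<1}" for w
  proof -
    have "ell d1 d2 w \<ge> 0" using that d1 d2 by (simp add: ell_def)
    then have "exp (-(s * ell d1 d2 w)) \<le> 1" using s by simp
    then show ?thesis using phi_nonneg[of a w] by (simp add: abs_mult mult_left_le)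
  qed
qed auto

lemma K_has_int:
  assumes a: "a > 0" and d1: "d1 > 0" and d2: "d2 > 0" and s: "s \<ge> 0"
  shows "((\<lambda>w. phi a w * exp (-(s * ell d1 d2 w))) has_integral Kf a d1 d2 s) {0<..<1}"
  unfolding Kf_def using K_integrable[OF assms] by (simp add: integrable_integral)

definition convval :: "real \<Rightarrow> real \<Rightarrow> real \<Rightarrow> real \<Rightarrow> real" where
  "convval a d1 d2 x = (if x + a*(d1+d2) > 0 then
     (x + a*(d1+d2)) powr (2*a-1) * Kf a d1 d2 (x + a*(d1+d2)) / ((d1*d2) powr a * Gamma a ^ 2) else 0)"

lemma conv_nn:
  assumes a: "a > 0" and d1: "d1 > 0" and d2: "d2 > 0"
  shows "(\<integral>\<^sup>+t. ennreal (scaled_centered_dens a d1 t * scaled_centered_dens a d2 (x - t)) \<partial>lborel)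
     = ennreal (convval a d1 d2 x)"
proof (cases "x + a*(d1+d2) > 0")
  case False
  have z: "scaled_centered_dens a d1 t * scaled_centered_dens a d2 (x - t) = 0" for t
  proof (rule ccontr)
    assume "\<not> ?thesis"
    then have "t/d1 + a > 0" "(x-t)/d2 + a > 0"
      by (auto simp: scaled_centered_dens_def gamma_dens_def split: if_splits)
    then have "t + a*d1 > 0" "x - t + a*d2 > 0" using d1 d2 by (auto simp: field_simps)
    then show False using False by (simp add: algebra_simps)
  qed
  have "(\<lambda>t. ennreal (scaled_centered_dens a d1 t * scaled_centered_dens a d2 (x - t))) = (\<lambda>t. 0)"
    by (intro ext) (simp only: z ennreal_0)
  then show ?thesis using False by (simp add: convval_def)
next
  case True
  define s where "s = x + a*(d1+d2)"
  have s: "s > 0" using True s_def by simp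
  define C0 where "C0 = s powr (a-1) * s powr (a-1) / ((d1*d2) powr a * Gamma a ^ 2)"
  let ?F = "\<lambda>t. scaled_centered_dens a d1 t * scaled_centered_dens a d2 (x - t)"
  have "(\<integral>\<^sup>+t. ennreal (?F t) \<partial>lborel) = ennreal s * (\<integral>\<^sup>+w. ennreal (?F (-a*d1 + s*w)) \<partial>lborel)"
    using nn_integral_real_affine[of "\<lambda>t. ennreal (?F t)" s "-a*d1"] s by simp
  also have "(\<integral>\<^sup>+w. ennreal (?F (-a*d1 + s*w)) \<partial>lborel) =
      (\<integral>\<^sup>+w. ennreal (indicator {0<..<1} w * (C0 * (phi a w * exp (-(s * ell d1 d2 w))))) \<partial>lborel)"
  proof (intro nn_integral_cong)
    fix w :: real
    have e1: "(-a*d1 + s*w)/d1 + a = s*w/d1" using d1 by (simp add: field_simps)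
    have e2: "(x - (-a*d1 + s*w))/d2 + a = s*(1-w)/d2" using d2 by (simp add: s_def field_simps)
    have g1: "scaled_centered_dens a d1 (-a*d1 + s*w) = gamma_dens a (s*w/d1)/d1"
      by (simp only: scaled_centered_dens_def e1)
    have g2: "scaled_centered_dens a d2 (x - (-a*d1 + s*w)) = gamma_dens a (s*(1-w)/d2)/d2"
      by (simp only: scaled_centered_dens_def e2)
    show "ennreal (?F (-a*d1 + s*w)) = ennreal (indicator {0<..<1} w * (C0 * (phi a w * exp (-(s * ell d1 d2 w)))))"
    proof (cases "w \<in> {0<..<1}")
      case False
      then have "w \<le> 0 \<or> w \<ge> 1" by auto
      then have "s*w/d1 \<le> 0 \<or> s*(1-w)/d2 \<le> 0"
        using s d1 d2 by (auto simp: divide_nonpos_pos mult_nonneg_nonpos)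
      then show ?thesis using False unfolding g1 g2
        by (auto simp: gamma_dens_def)
    next
      case True
      then have w: "0 < w" "w < 1" by auto
      have p1: "(s*w/d1) powr (a-1) / d1 = s powr (a-1) * w powr (a-1) / d1 powr a"
        using powr_shift1[OF d1, of "a-1"] by (simp add: powr_divide powr_mult)
      have p2: "(s*(1-w)/d2) powr (a-1) / d2 = s powr (a-1) * (1-w) powr (a-1) / d2 powr a"
        using powr_shift1[OF d2, of "a-1"] by (simp add: powr_divide powr_mult)
      have ex: "exp (-(s*w/d1)) * exp (-(s*(1-w)/d2)) = exp (-(s * ell d1 d2 w))"
        by (simp add: ell_def exp_add[symmetric] field_simps)
      have "?F (-a*d1 + s*w) = ((s*w/d1) powr (a-1) / d1) * ((s*(1-w)/d2) powr (a-1) / d2)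
          * (exp (-(s*w/d1)) * exp (-(s*(1-w)/d2))) / Gamma a ^ 2"
        using w s d1 d2 unfolding scaled_centered_dens_def gamma_dens_def e1 e2
        by (simp add: power2_eq_square mult_ac)
      also have "\<dots> = C0 * (phi a w * exp (-(s * ell d1 d2 w)))"
        unfolding p1 p2 ex C0_def phi_def by (simp add: powr_mult field_simps)
      finally show ?thesis using True by simp
    qed
  qed
  also have "\<dots> = ennreal (C0 * Kf a d1 d2 s)"
  proof (rule nn_integral_has_integral_lebesgue)
    have C0: "C0 \<ge> 0" unfolding C0_def by simp
    show "0 \<le> C0 * (phi a w * exp (-(s * ell d1 d2 w)))" for w
      using C0 phi_nonneg[of a w] by simp
    show "((\<lambda>w. C0 * (phi a w * exp (-(s * ell d1 d2 w)))) has_integral C0 * Kf a d1 d2 s) {0<..<1}"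
      by (rule has_integral_mult_right[OF K_has_int]) (use a d1 d2 s in auto)
  qed
  also have "ennreal s * ennreal (C0 * Kf a d1 d2 s) = ennreal (s * (C0 * Kf a d1 d2 s))"
    using s by (simp add: ennreal_mult')
  also have "s * (C0 * Kf a d1 d2 s) = convval a d1 d2 x"
  proof -
    have "s powr (2*a-1) = s * (s powr (a-1) * s powr (a-1))"
      using powr_shift1[OF s, of "2*a-2"] by (simp add: powr_add[symmetric])
    then show ?thesis using True unfolding convval_def C0_def s_def[symmetric] by simp
  qed
  finally show ?thesis .
qed

lemma Kf_nonneg:
  assumes "a > 0" "d1 > 0" "d2 > 0" "s \<ge> 0"
  shows "Kf a d1 d2 s \<ge> 0"
  by (rule has_integral_nonneg[OF K_has_int[OF assms]]) (simp add: phi_nonneg)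

lemma convval_nonneg:
  assumes "a > 0" "d1 > 0" "d2 > 0"
  shows "convval a d1 d2 x \<ge> 0"
  using Kf_nonneg[OF assms] by (simp add: convval_def)

lemma conv_eq:
  assumes a: "a > 0" and d1: "d1 > 0" and d2: "d2 > 0"
  shows "conv_dens (scaled_centered_dens a d1) (scaled_centered_dens a d2) x = convval a d1 d2 x"
proof -
  have "integrable lborel (\<lambda>t. scaled_centered_dens a d1 t * scaled_centered_dens a d2 (x - t)) \<and>
      integral\<^sup>L lborel (\<lambda>t. scaled_centered_dens a d1 t * scaled_centered_dens a d2 (x - t)) = convval a d1 d2 x"
  proof -
    have m: "(\<lambda>t. scaled_centered_dens a d1 t * scaled_centered_dens a d2 (x - t)) \<in> borel_measurable lborel"
      by measurable
    have nn: "AE t in lborel. 0 \<le> scaled_centered_dens a d1 t * scaled_centered_dens a d2 (x - t)"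
      by (rule AE_I2) (use scd_nonneg a d1 d2 in simp)
    show ?thesis
      using nn_integral_eq_integrable[OF m nn convval_nonneg[OF assms, of x]] conv_nn[OF assms, of x]
      by blast
  qed
  then show ?thesis by (simp add: conv_dens_def)
qed

lemma conv_comm:
  "conv_dens f g x = conv_dens g f x"
proof -
  have "conv_dens f g x = \<bar>-1\<bar> *\<^sub>R (\<integral>u. f (x + -1 * u) * g (x - (x + -1 * u)) \<partial>lborel)"
    unfolding conv_dens_def by (rule lborel_integral_real_affine) simp
  then show ?thesis by (simp add: conv_dens_def mult.commute)
qed

lemma lincomb_sym: "lincomb_dens a d1 d2 = lincomb_dens a d2 d1"
proof -
  have "conv_dens (scaled_centered_dens a d1) (scaled_centered_dens a d2) =
      conv_dens (scaled_centered_dens a d2) (scaled_centered_dens a d1)"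
    by (rule ext) (rule conv_comm)
  then show ?thesis unfolding lincomb_dens_def by auto
qed

lemma Kf_const:
  assumes a: "a > 0" and c: "c > 0"
  shows "Kf a c c s = exp (-(s/c)) * Beta a a"
proof -
  have l: "ell c c w = 1/c" for w using c by (simp add: ell_def field_simps)
  have "(\<lambda>w. phi a w * exp (-(s * ell c c w))) = (\<lambda>w. phi a w * exp (-(s/c)))"
    by (rule ext) (simp add: l)
  moreover have "((\<lambda>w. phi a w * exp (-(s/c))) has_integral Beta a a * exp (-(s/c))) {0<..<1}"
    by (rule has_integral_mult_left[OF phi_int[OF a]])
  ultimately have "((\<lambda>w. phi a w * exp (-(s * ell c c w))) has_integral Beta a a * exp (-(s/c))) {0<..<1}"
    by simp
  then show ?thesis unfolding Kf_def using integral_unique by (metis mult.commute)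
qed

lemma fV_eq:
  assumes a: "a > 0" and c: "c > 0"
  shows "lincomb_dens a c c x = scaled_centered_dens (2*a) c x"
proof -
  have L: "lincomb_dens a c c x = convval a c c x"
    using c conv_eq[OF a c c] by (simp add: lincomb_dens_def)
  show ?thesis
  proof (cases "x + a*(c+c) > 0")
    case False
    then have "x/c + 2*a \<le> 0" using c by (simp add: field_simps)
    then show ?thesis using False L by (simp add: convval_def scaled_centered_dens_def gamma_dens_def)
  next
    case True
    define s where "s = x + a*(c+c)"
    have s: "s > 0" using True s_def by simp
    have e: "x/c + 2*a = s/c" using c by (simp add: s_def field_simps)
    have B: "Beta a a = Gamma a ^ 2 / Gamma (2*a)"
      by (simp only: Beta_def power2_eq_square mult_2)
    have G: "Gamma a > 0" "Gamma (2*a) > 0" using a by auto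
    have p1: "(c*c) powr a = c powr (2*a-1) * c"
    proof -
      have "(c*c) powr a = c powr (a + a)" by (simp only: powr_mult powr_add)
      also have "\<dots> = c powr ((2*a-1)+1)" by (rule arg_cong[where f="\<lambda>e. c powr e"]) simp
      also have "\<dots> = c powr (2*a-1) * c" by (subst powr_shift1[OF c]) (rule mult.commute)
      finally show ?thesis .
    qed
    have "convval a c c x = s powr (2*a-1) * (exp (-(s/c)) * Beta a a) / ((c*c) powr a * Gamma a ^ 2)"
      using True Kf_const[OF a c, of s] s by (simp add: convval_def s_def)
    also have "\<dots> = (s/c) powr (2*a-1) * exp (-(s/c)) / Gamma (2*a) / c"
    proof -
      have alg: "X*(E*(g^2/g2))/((Y*c)*g^2) = X/Y*E/g2/c" if "g > 0" "g2 > 0" "c > 0" "Y > 0"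
        for X E g g2 Y c :: real using that by (simp add: field_simps power2_eq_square)
      show ?thesis unfolding B p1 powr_divide
        by (rule alg) (use G c in auto)
    qed
    also have "\<dots> = scaled_centered_dens (2*a) c x"
      using s c by (simp add: scaled_centered_dens_def gamma_dens_def e)
    finally show ?thesis using L by simp
  qed
qed

lemma MU_bound:
  assumes a: "a > 0" and d1: "d1 \<ge> 0" and d2: "d2 > 0"
  shows "(\<integral>\<^sup>+x. ennreal ((x + a*(d1+d2)) * lincomb_dens a d1 d2 x) \<partial>lborel) = ennreal (a*(d1+d2))"
proof (cases "d1 = 0")
  case True
  then show ?thesis
    using scd_moment[OF a d2, of "a*d2"] by (simp add: lincomb_dens_def)
next
  case False
  then have d1: "d1 > 0" using d1 by simp
  define x0 where "x0 = -a*(d1+d2)"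
  let ?f = "scaled_centered_dens a d1" and ?g = "scaled_centered_dens a d2"
  have fU: "lincomb_dens a d1 d2 x = convval a d1 d2 x" for x
    using conv_eq[OF a d1 d2] d1 d2 by (simp add: lincomb_dens_def)
  have "(\<integral>\<^sup>+x. ennreal ((x + a*(d1+d2)) * lincomb_dens a d1 d2 x) \<partial>lborel) =
      (\<integral>\<^sup>+x. ennreal (x - x0) * (\<integral>\<^sup>+t. ennreal (?f t * ?g (x - t)) \<partial>lborel) \<partial>lborel)"
  proof (intro nn_integral_cong)
    fix x :: real
    show "ennreal ((x + a*(d1+d2)) * lincomb_dens a d1 d2 x) =
        ennreal (x - x0) * (\<integral>\<^sup>+t. ennreal (?f t * ?g (x - t)) \<partial>lborel)"
      unfolding conv_nn[OF a d1 d2] fU x0_def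
      by (simp add: ennreal_mult'' convval_nonneg[OF a d1 d2])
  qed
  also have "\<dots> = (\<integral>\<^sup>+x. (\<integral>\<^sup>+t. ennreal ((x - x0) * (?f t * ?g (x - t))) \<partial>lborel) \<partial>lborel)"
  proof (intro nn_integral_cong)
    fix x :: real
    have "ennreal (x - x0) * (\<integral>\<^sup>+t. ennreal (?f t * ?g (x - t)) \<partial>lborel) =
        (\<integral>\<^sup>+t. ennreal (x - x0) * ennreal (?f t * ?g (x - t)) \<partial>lborel)"
      by (rule nn_integral_cmult[symmetric]) measurable
    also have "\<dots> = (\<integral>\<^sup>+t. ennreal ((x - x0) * (?f t * ?g (x - t))) \<partial>lborel)"
      by (intro nn_integral_cong ennreal_mult''[symmetric] mult_nonneg_nonneg scd_nonneg a d1 d2)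
    finally show "ennreal (x - x0) * (\<integral>\<^sup>+t. ennreal (?f t * ?g (x - t)) \<partial>lborel) =
        (\<integral>\<^sup>+t. ennreal ((x - x0) * (?f t * ?g (x - t))) \<partial>lborel)" .
  qed
  also have "\<dots> = (\<integral>\<^sup>+t. (\<integral>\<^sup>+x. ennreal ((x - x0) * (?f t * ?g (x - t))) \<partial>lborel) \<partial>lborel)"
    by (rule lborel_pair.Fubini'[symmetric]) measurable
  also have "\<dots> = (\<integral>\<^sup>+t. ennreal ((t - x0) * ?f t) \<partial>lborel)"
  proof (intro nn_integral_cong)
    fix t :: real
    have "(\<integral>\<^sup>+x. ennreal ((x - x0) * (?f t * ?g (x - t))) \<partial>lborel) =
        (\<integral>\<^sup>+x. ennreal (?f t) * ennreal ((x - x0) * ?g (x - t)) \<partial>lborel)"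
      by (intro nn_integral_cong) (simp add: ennreal_mult'[symmetric] scd_nonneg a d1 mult_ac)
    also have "\<dots> = ennreal (?f t) * (\<integral>\<^sup>+x. ennreal ((x - x0) * ?g (x - t)) \<partial>lborel)"
      by (rule nn_integral_cmult) measurable
    also have "(\<integral>\<^sup>+x. ennreal ((x - x0) * ?g (x - t)) \<partial>lborel) =
        (\<integral>\<^sup>+y. ennreal ((y + (t - x0)) * ?g y) \<partial>lborel)"
      using nn_integral_real_affine[of "\<lambda>x. ennreal ((x - x0) * ?g (x - t))" 1 t]
      by (simp add: algebra_simps)
    finally have I: "(\<integral>\<^sup>+x. ennreal ((x - x0) * (?f t * ?g (x - t))) \<partial>lborel) =
        ennreal (?f t) * (\<integral>\<^sup>+y. ennreal ((y + (t - x0)) * ?g y) \<partial>lborel)" .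
    show "(\<integral>\<^sup>+x. ennreal ((x - x0) * (?f t * ?g (x - t))) \<partial>lborel) = ennreal ((t - x0) * ?f t)"
    proof (cases "t/d1 + a > 0")
      case True
      then have "t + a*d1 > 0" using d1 by (simp add: field_simps)
      then have "t - x0 \<ge> a*d2" by (simp add: x0_def algebra_simps)
      then have M: "(\<integral>\<^sup>+y. ennreal ((y + (t - x0)) * ?g y) \<partial>lborel) = ennreal (t - x0)"
        by (rule scd_moment[OF a d2])
      have tx: "0 \<le> t - x0" using \<open>t - x0 \<ge> a*d2\<close> a d2
        by (meson less_imp_le order_trans mult_nonneg_nonneg)
      have "ennreal (?f t) * ennreal (t - x0) = ennreal ((t - x0) * ?f t)"
        using ennreal_mult'[OF tx, of "?f t"] by (simp only: mult.commute)
      then show ?thesis unfolding I M .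
    next
      case False
      then have "?f t = 0" by (simp add: scaled_centered_dens_def gamma_dens_def)
      then show ?thesis unfolding I by simp
    qed
  qed
  also have "\<dots> = ennreal (-x0)"
    using scd_moment[OF a d1, of "-x0"] d2 a by (simp add: x0_def algebra_simps)
  finally show ?thesis by (simp add: x0_def)
qed

lemma MV_bound:
  assumes a: "a > 0" "a \<le> 1/2" and c: "c > 0" and dl: "2*a*c + x0 > 0" and x0: "x0 \<le> 0"
  shows "ennreal (-x0) < (\<integral>\<^sup>+x. ennreal ((x - x0) * scaled_centered_dens (2*a) c x) \<partial>lborel)"
proof -
  define \<delta> where "\<delta> = 2*a*c + x0"
  have dp: "\<delta> > 0" using dl by (simp add: \<delta>_def)
  define \<gamma> where "\<gamma> = gamma_dens (2*a)"
  have a2: "2*a > 0" using a by simp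
  have gnn: "0 \<le> \<gamma> u" for u unfolding \<gamma>_def by (rule gamma_dens_nonneg[OF a2])
  have g0: "\<gamma> u = 0" if "u \<le> 0" for u using that by (simp add: \<gamma>_def gamma_dens_def)
  have [measurable]: "\<gamma> \<in> borel_measurable borel" unfolding \<gamma>_def by measurable
  define MV where "MV = (\<integral>\<^sup>+x. ennreal ((x - x0) * scaled_centered_dens (2*a) c x) \<partial>lborel)"
  have "MV = ennreal c * (\<integral>\<^sup>+u. ennreal ((-2*a*c + c*u - x0) * scaled_centered_dens (2*a) c (-2*a*c + c*u)) \<partial>lborel)"
    unfolding MV_def
    using nn_integral_real_affine[of "\<lambda>x. ennreal ((x - x0) * scaled_centered_dens (2*a) c x)" c "-2*a*c"] c
    by simp
  also have "\<dots> = (\<integral>\<^sup>+u. ennreal c * ennreal ((-2*a*c + c*u - x0) * scaled_centered_dens (2*a) c (-2*a*c + c*u)) \<partial>lborel)"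
    by (rule nn_integral_cmult[symmetric]) measurable
  also have "\<dots> = (\<integral>\<^sup>+u. ennreal ((c*u - \<delta>) * \<gamma> u) \<partial>lborel)"
  proof (intro nn_integral_cong)
    fix u :: real
    have e: "(-2*a*c + c*u)/c + 2*a = u" using c by (simp add: field_simps)
    have r: "c * ((-2*a*c + c*u - x0) * scaled_centered_dens (2*a) c (-2*a*c + c*u)) = (c*u - \<delta>) * \<gamma> u"
      using c by (simp add: scaled_centered_dens_def e \<gamma>_def \<delta>_def field_simps)
    show "ennreal c * ennreal ((-2*a*c + c*u - x0) * scaled_centered_dens (2*a) c (-2*a*c + c*u)) =
        ennreal ((c*u - \<delta>) * \<gamma> u)"
      by (metis ennreal_mult' less_imp_le c r)
  qed
  finally have MVe: "MV = (\<integral>\<^sup>+u. ennreal ((c*u - \<delta>) * \<gamma> u) \<partial>lborel)" .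
  define B where "B = (\<integral>\<^sup>+u. ennreal (min (c*u) \<delta> * \<gamma> u) \<partial>lborel)"
  define Cc where "Cc = (\<integral>\<^sup>+u. ennreal ((\<delta> - min (c*u) \<delta>) * \<gamma> u) \<partial>lborel)"
  have P1: "ennreal ((c*u + 0) * \<gamma> u) = ennreal ((c*u - \<delta>) * \<gamma> u) + ennreal (min (c*u) \<delta> * \<gamma> u)" for u
  proof (cases "u > 0")
    case False then show ?thesis using g0[of u] by simp
  next
    case True
    show ?thesis
    proof (cases "c*u \<ge> \<delta>")
      case True
      then have "ennreal ((c*u - \<delta>) * \<gamma> u) + ennreal (min (c*u) \<delta> * \<gamma> u) =
          ennreal ((c*u - \<delta>) * \<gamma> u + min (c*u) \<delta> * \<gamma> u)"
        using gnn[of u] dp by (intro ennreal_plus[symmetric]) auto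
      also have "(c*u - \<delta>) * \<gamma> u + min (c*u) \<delta> * \<gamma> u = (c*u + 0) * \<gamma> u"
        using True by (simp add: algebra_simps)
      finally show ?thesis by simp
    next
      case False
      then have "(c*u - \<delta>) * \<gamma> u \<le> 0" using gnn[of u] by (simp add: mult_nonpos_nonneg)
      then have "ennreal ((c*u - \<delta>) * \<gamma> u) = 0" by (simp add: ennreal_eq_0_iff)
      then show ?thesis using False by simp
    qed
  qed
  have P2: "ennreal ((0*u + \<delta>) * \<gamma> u) = ennreal (min (c*u) \<delta> * \<gamma> u) + ennreal ((\<delta> - min (c*u) \<delta>) * \<gamma> u)" for u
  proof (cases "u > 0")
    case False then show ?thesis using g0[of u] by simp
  next
    case True
    have "ennreal (min (c*u) \<delta> * \<gamma> u) + ennreal ((\<delta> - min (c*u) \<delta>) * \<gamma> u) =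
        ennreal (min (c*u) \<delta> * \<gamma> u + (\<delta> - min (c*u) \<delta>) * \<gamma> u)"
      using gnn[of u] dp True c by (intro ennreal_plus[symmetric]) auto
    then show ?thesis by (simp add: algebra_simps)
  qed
  have I1: "ennreal (c * (2*a) + 0) = MV + B"
  proof -
    have "ennreal (c * (2*a) + 0) = (\<integral>\<^sup>+u. ennreal ((c*u + 0) * \<gamma> u) \<partial>lborel)"
      unfolding \<gamma>_def by (rule gamma_nn[symmetric]) (use a2 c in auto)
    also have "\<dots> = (\<integral>\<^sup>+u. ennreal ((c*u - \<delta>) * \<gamma> u) + ennreal (min (c*u) \<delta> * \<gamma> u) \<partial>lborel)"
      by (intro nn_integral_cong P1)
    also have "\<dots> = MV + B" unfolding MVe B_def by (rule nn_integral_add) measurable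
    finally show ?thesis .
  qed
  have I2: "ennreal (0 * (2*a) + \<delta>) = B + Cc"
  proof -
    have "ennreal (0 * (2*a) + \<delta>) = (\<integral>\<^sup>+u. ennreal ((0*u + \<delta>) * \<gamma> u) \<partial>lborel)"
      unfolding \<gamma>_def by (rule gamma_nn[symmetric]) (use a2 dp in auto)
    also have "\<dots> = (\<integral>\<^sup>+u. ennreal (min (c*u) \<delta> * \<gamma> u) + ennreal ((\<delta> - min (c*u) \<delta>) * \<gamma> u) \<partial>lborel)"
      by (intro nn_integral_cong P2)
    also have "\<dots> = B + Cc" unfolding Cc_def B_def by (rule nn_integral_add) measurable
    finally show ?thesis .
  qed
  define p where "p = \<delta>/(4*c)"
  define q where "q = \<delta>/(2*c)"
  have pq: "0 < p" "p \<le> q" using dp c by (auto simp: p_def q_def field_simps)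
  define m where "m = q powr (2*a-1) * exp (-q) / Gamma (2*a)"
  have mpos: "m > 0" using pq a2 by (simp add: m_def)
  define \<kappa> where "\<kappa> = \<delta>/2 * m"
  have kpos: "\<kappa> > 0" using dp mpos by (simp add: \<kappa>_def)
  have Cpos: "Cc > 0"
  proof -
    have "ennreal \<kappa> * ennreal (q - p) = (\<integral>\<^sup>+u. ennreal \<kappa> * indicator {p..q} u \<partial>lborel)"
      using pq by (simp add: nn_integral_cmult_indicator)
    also have "\<dots> \<le> Cc" unfolding Cc_def
    proof (intro nn_integral_mono)
      fix u :: real
      show "ennreal \<kappa> * indicator {p..q} u \<le> ennreal ((\<delta> - min (c*u) \<delta>) * \<gamma> u)"
      proof (cases "u \<in> {p..q}")
        case False then show ?thesis by simp
      next
        case True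
        then have u: "p \<le> u" "u \<le> q" by auto
        have upos: "u > 0" using u pq by simp
        have "c*u \<le> \<delta>/2" using u(2) c by (simp add: q_def field_simps)
        then have h1: "\<delta>/2 \<le> \<delta> - min (c*u) \<delta>" by simp
        have "q powr (2*a-1) \<le> u powr (2*a-1)" by (rule powr_mono2') (use a upos u in auto)
        moreover have "exp (-q) \<le> exp (-u)" using u by simp
        ultimately have "q powr (2*a-1) * exp (-q) \<le> u powr (2*a-1) * exp (-u)"
          by (intro mult_mono) auto
        then have h2: "m \<le> \<gamma> u" using upos a2
          by (simp add: m_def \<gamma>_def gamma_dens_def divide_right_mono)
        have "\<kappa> \<le> (\<delta> - min (c*u) \<delta>) * \<gamma> u"
          unfolding \<kappa>_def by (rule mult_mono[OF h1 h2]) (use mpos dp in auto)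
        then show ?thesis using True by (simp add: ennreal_leI)
      qed
    qed
    finally have "ennreal \<kappa> * ennreal (q - p) \<le> Cc" .
    moreover have "ennreal \<kappa> * ennreal (q - p) > 0"
      using kpos pq dp c by (simp add: ennreal_mult'[symmetric] p_def q_def field_simps)
    ultimately show ?thesis by order
  qed
  have Bfin: "B \<noteq> top" using I2 by (metis ennreal_add_eq_top ennreal_neq_top)
  have Cfin: "Cc \<noteq> top" using I2 by (metis ennreal_add_eq_top ennreal_neq_top)
  have MVfin: "MV \<noteq> top" using I1 by (metis ennreal_add_eq_top ennreal_neq_top)
  obtain b where b: "B = ennreal b" "b \<ge> 0" using Bfin by (cases B rule: ennreal_cases) auto
  obtain cc where cc: "Cc = ennreal cc" "cc \<ge> 0" using Cfin by (cases Cc rule: ennreal_cases) auto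
  obtain mv where mv: "MV = ennreal mv" "mv \<ge> 0" using MVfin by (cases MV rule: ennreal_cases) auto
  have ccpos: "cc > 0" using Cpos cc by simp
  have "ennreal \<delta> = ennreal (b + cc)" using I2 b cc by (simp add: ennreal_plus)
  then have e2: "\<delta> = b + cc" using b cc dp by (subst (asm) ennreal_inj) auto
  have "ennreal (c*(2*a)) = ennreal (mv + b)" using I1 b mv by (simp add: ennreal_plus)
  then have e1: "c*(2*a) = mv + b" using b mv c a2 by (subst (asm) ennreal_inj) auto
  have "-x0 < mv" using e1 e2 ccpos by (simp add: \<delta>_def algebra_simps)
  moreover have "0 < mv" using e1 e2 ccpos x0 by (simp add: \<delta>_def algebra_simps)
  ultimately have "ennreal (-x0) < ennreal mv" by (intro ennreal_lessI)
  then show ?thesis using mv MV_def by simp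
qed

lemma sign_pattern:
  fixes Q :: "real \<Rightarrow> real"
  assumes conv: "convex_on {0<..} Q"
    and e: "\<epsilon> > 0" "\<And>s. 0 < s \<Longrightarrow> s < \<epsilon> \<Longrightarrow> Q s > 0"
    and N: "\<And>s. s > N \<Longrightarrow> Q s > 0"
    and st: "s0 > 0" "Q s0 < 0"
  shows "\<exists>s1 s2. 0 < s1 \<and> s1 < s2 \<and> (\<forall>s. 0 < s \<and> s < s1 \<longrightarrow> Q s > 0) \<and>
     (\<forall>s. s1 < s \<and> s < s2 \<longrightarrow> Q s < 0) \<and> (\<forall>s. s > s2 \<longrightarrow> Q s > 0)"
proof -
  have cv: "Q ((1-\<theta>)*x + \<theta>*y) \<le> (1-\<theta>)*Q x + \<theta>*Q y"
    if "0 < x" "0 < y" "0 \<le> \<theta>" "\<theta> \<le> 1" for x y \<theta>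
    using convex_onD[OF conv, of \<theta> x y] that by simp
  define S where "S = {s. 0 < s \<and> Q s < 0}"
  have s0S: "s0 \<in> S" using st by (simp add: S_def)
  have Sne: "S \<noteq> {}" using s0S by blast
  have Sge: "s \<ge> \<epsilon>" if "s \<in> S" for s
    using that e(2)[of s] by (force simp: S_def)
  have Sle: "s \<le> N" if "s \<in> S" for s
    using that N[of s] by (force simp: S_def)
  have bb: "bdd_below S" unfolding bdd_below_def using Sge by blast
  have ba: "bdd_above S" unfolding bdd_above_def using Sle by blast
  define s1 where "s1 = Inf S"
  define s2 where "s2 = Sup S"
  have s1le: "s1 \<le> s" if "s \<in> S" for s unfolding s1_def using that bb by (rule cInf_lower)
  have s2ge: "s \<le> s2" if "s \<in> S" for s unfolding s2_def using that ba by (rule cSup_upper)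
  have s1pos: "s1 \<ge> \<epsilon>" unfolding s1_def using Sne Sge by (intro cInf_greatest) auto
  have between: "s \<in> S" if "p \<in> S" "q \<in> S" "p \<le> s" "s \<le> q" for p q s
  proof (cases "p = q")
    case True then show ?thesis using that by simp
  next
    case False
    then have pq: "p < q" using that by simp
    define \<theta> where "\<theta> = (s - p)/(q - p)"
    have th: "0 \<le> \<theta>" "\<theta> \<le> 1" using that pq by (auto simp: \<theta>_def field_simps)
    have sp: "(1-\<theta>)*p + \<theta>*q = s"
    proof -
      have "\<theta>*(q-p) = s - p" using pq by (simp add: \<theta>_def)
      then show ?thesis by (simp add: algebra_simps)
    qed
    have pS: "0 < p" "Q p < 0" and qS: "0 < q" "Q q < 0" using that by (auto simp: S_def)
    have "Q s \<le> (1-\<theta>)*Q p + \<theta>*Q q" using cv[OF pS(1) qS(1) th] sp by simp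
    also have "\<dots> < 0"
    proof -
      have "(1-\<theta>)*Q p \<le> 0" using th pS by (simp add: mult_nonneg_nonpos)
      moreover have "\<theta>*Q q \<le> 0" using th qS by (simp add: mult_nonneg_nonpos)
      moreover have "(1-\<theta>)*Q p < 0 \<or> \<theta>*Q q < 0"
        using th pS qS by (cases "\<theta> = 1") (auto simp: mult_pos_neg)
      ultimately show ?thesis by linarith
    qed
    finally show ?thesis using pS qS sp that by (auto simp: S_def)
  qed
  have A: "Q s > 0" if "0 < s" "s < s1" for s
  proof -
    have nS: "s \<notin> S" using that s1le by force
    then have q0: "Q s \<ge> 0" using that by (simp add: S_def not_less)
    show ?thesis
    proof (rule ccontr)
      assume "\<not> Q s > 0"
      then have Qs: "Q s = 0" using q0 by simp
      define t where "t = (s + s1)/2"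
      have ts: "s < t" "t < s1" using that by (auto simp: t_def)
      have s0g: "s1 \<le> s0" using s1le s0S by simp
      define \<theta> where "\<theta> = (t - s)/(s0 - s)"
      have th: "0 < \<theta>" "\<theta> \<le> 1" using ts s0g by (auto simp: \<theta>_def field_simps)
      have tp: "(1-\<theta>) * s + \<theta> * s0 = t"
      proof -
        have "\<theta>*(s0-s) = t - s" using ts s0g by (simp add: \<theta>_def)
        then show ?thesis by (simp add: algebra_simps)
      qed
      have "Q t \<le> (1-\<theta>)*Q s + \<theta>*Q s0" using cv[OF that(1) st(1), of \<theta>] th tp by simp
      also have "\<dots> < 0" using Qs th st by (simp add: mult_pos_neg)
      finally have "t \<in> S" using ts that by (auto simp: S_def)
      then show False using s1le ts by force
    qed
  qed
  have C: "Q s > 0" if "s > s2" for s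
  proof -
    have s0g: "s0 \<le> s2" using s2ge s0S by simp
    have spos: "s > 0" using that s0g st by simp
    have nS: "s \<notin> S" using that s2ge by force
    then have q0: "Q s \<ge> 0" using spos by (simp add: S_def not_less)
    show ?thesis
    proof (rule ccontr)
      assume "\<not> Q s > 0"
      then have Qs: "Q s = 0" using q0 by simp
      define t where "t = (s + s2)/2"
      have ts: "t < s" "s2 < t" using that by (auto simp: t_def)
      define \<theta> where "\<theta> = (s - t)/(s - s0)"
      have th: "0 < \<theta>" "\<theta> \<le> 1" using ts s0g by (auto simp: \<theta>_def field_simps)
      have tp: "(1-\<theta>) * s + \<theta> * s0 = t"
      proof -
        have "\<theta>*(s-s0) = s - t" using ts s0g by (simp add: \<theta>_def)
        then show ?thesis by (simp add: algebra_simps)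
      qed
      have "Q t \<le> (1-\<theta>)*Q s + \<theta>*Q s0" using cv[OF spos st(1), of \<theta>] th tp by simp
      also have "\<dots> < 0" using Qs th st by (simp add: mult_pos_neg)
      finally have "t \<in> S" using ts s0g st by (auto simp: S_def)
      then show False using s2ge ts by force
    qed
  qed
  have B: "Q s < 0" if "s1 < s" "s < s2" for s
  proof -
    have "\<exists>p\<in>S. p < s" using cInf_less_iff[OF Sne bb, of s] that(1) unfolding s1_def by blast
    then obtain p where p: "p \<in> S" "p < s" by blast
    have "\<exists>q\<in>S. s < q" using less_cSup_iff[OF Sne ba, of s] that(2) unfolding s2_def by blast
    then obtain q where q: "q \<in> S" "s < q" by blast
    have "s \<in> S" using between[OF p(1) q(1)] p q by simp
    then show ?thesis by (simp add: S_def)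
  qed
  have lt: "s1 < s2"
  proof -
    define r where "r = \<epsilon>/2"
    have r: "0 < r" "r < \<epsilon>" using e by (auto simp: r_def)
    have Qr: "Q r > 0" using e(2)[OF r] .
    have rs0: "r < s0" using Sge[OF s0S] r by simp
    define \<theta> where "\<theta> = - Q s0 / (2*(Q r - Q s0))"
    have th: "0 < \<theta>" "\<theta> \<le> 1" using Qr st by (auto simp: \<theta>_def field_simps)
    define t where "t = (1-\<theta>) * s0 + \<theta>*r"
    have "Q t \<le> (1-\<theta>)*Q s0 + \<theta>*Q r" unfolding t_def using cv[OF st(1) r(1), of \<theta>] th by simp
    also have "\<dots> = Q s0 + \<theta>*(Q r - Q s0)" by (simp add: algebra_simps)
    also have "\<theta>*(Q r - Q s0) = - Q s0 / 2" using Qr st by (simp add: \<theta>_def field_simps)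
    also have "Q s0 + - Q s0 / 2 < 0" using st by simp
    finally have Qt: "Q t < 0" .
    have tlt: "t < s0" using th rs0 by (simp add: t_def algebra_simps mult_strict_left_mono)
    have tpos: "t > 0" using th r st unfolding t_def
      by (smt (verit) mult_nonneg_nonneg mult_pos_pos)
    have "t \<in> S" using Qt tpos by (simp add: S_def)
    then have "s1 \<le> t" by (rule s1le)
    then show ?thesis using tlt s2ge[OF s0S] by simp
  qed
  show ?thesis
    using s1pos e(1) lt A B C by (intro exI[of _ s1] exI[of _ s2]) auto
qed

lemma Klow:
  assumes a: "a > 0" and d1: "d1 > 0" and d2: "d2 > 0" and s: "s \<ge> 0"
  shows "exp (-(s*(1/d1 + 1/d2))) * Beta a a \<le> Kf a d1 d2 s"
proof (rule has_integral_le)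
  show "((\<lambda>w. phi a w * exp (-(s*(1/d1 + 1/d2)))) has_integral exp (-(s*(1/d1 + 1/d2))) * Beta a a) {0<..<1}"
    using has_integral_mult_left[OF phi_int[OF a], of "exp (-(s*(1/d1 + 1/d2)))"] by (simp add: mult.commute)
  show "((\<lambda>w. phi a w * exp (-(s * ell d1 d2 w))) has_integral Kf a d1 d2 s) {0<..<1}"
    by (rule K_has_int[OF a d1 d2 s])
  fix w :: real assume w: "w \<in> {0<..<1}"
  have "w/d1 \<le> 1/d1" "(1-w)/d2 \<le> 1/d2" using w d1 d2 by (auto simp: divide_right_mono)
  then have "ell d1 d2 w \<le> 1/d1 + 1/d2" by (simp add: ell_def)
  then have "s * ell d1 d2 w \<le> s*(1/d1 + 1/d2)" using s by (simp add: mult_left_mono)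
  then have "exp (-(s*(1/d1 + 1/d2))) \<le> exp (-(s * ell d1 d2 w))" by simp
  then show "phi a w * exp (-(s*(1/d1 + 1/d2))) \<le> phi a w * exp (-(s * ell d1 d2 w))"
    by (rule mult_left_mono) (rule phi_nonneg)
qed

lemma Beta_pos: "(a::real) > 0 \<Longrightarrow> Beta a a > 0"
  by (simp add: Beta_def)

lemma Kpos:
  assumes a: "a > 0" and d1: "d1 > 0" and d2: "d2 > 0" and s: "s \<ge> 0"
  shows "Kf a d1 d2 s > 0"
  using Klow[OF assms] Beta_pos[OF a] by (smt (verit) exp_gt_zero mult_pos_pos)

lemma Kinf:
  assumes a: "a > 0" "a \<le> 1" and d1: "d1 > 0" and d12: "d1 < d2" and s: "s \<ge> 0"
    and eta: "0 < \<eta>" "\<eta> < 1"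
  shows "\<eta> powr a / a * exp (-(s * (1/d2 + \<eta> * (1/d1 - 1/d2)))) \<le> Kf a d1 d2 s"
proof -
  have d2: "d2 > 0" using d1 d12 by simp
  define r where "r = 1/d2 + \<eta> * (1/d1 - 1/d2)"
  let ?F = "\<lambda>w. phi a w * exp (-(s * ell d1 d2 w))"
  have KI: "(?F has_integral Kf a d1 d2 s) {0..1}"
    using K_has_int[OF a(1) d1 d2 s] by (simp add: has_integral_Icc_iff_Ioo)
  have "?F integrable_on {0..\<eta>}"
    by (rule integrable_on_subinterval[OF has_integral_integrable[OF KI]]) (use eta in auto)
  then have KI2: "(?F has_integral integral {0..\<eta>} ?F) {0..\<eta>}" by (simp add: integrable_integral)
  have P: "((\<lambda>w. w powr (a-1) * exp (-(s* r))) has_integral (\<eta> powr a / a * exp (-(s* r)))) {0..\<eta>}"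
    using has_integral_mult_left[OF has_integral_powr_from_0[of "a-1" \<eta>], of "exp (-(s* r))"] a eta
    by simp
  have "\<eta> powr a / a * exp (-(s* r)) \<le> integral {0..\<eta>} ?F"
  proof (rule has_integral_le[OF P KI2])
    fix w assume w: "w \<in> {0..\<eta>}"
    show "w powr (a-1) * exp (-(s* r)) \<le> ?F w"
    proof (cases "w = 0")
      case True then show ?thesis by (simp add: phi_def)
    next
      case False
      then have w0: "0 < w" "w \<le> \<eta>" using w by auto
      have "1 powr (a-1) \<le> (1-w) powr (a-1)"
        by (rule powr_mono2') (use a w0 eta in auto)
      then have o1: "1 \<le> (1-w) powr (a-1)" by simp
      have "ell d1 d2 w = 1/d2 + w*(1/d1 - 1/d2)" using d1 d2 by (simp add: ell_def field_simps)
      also have "\<dots> \<le> r" unfolding r_def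
        using w0 d1 d12 by (intro add_left_mono mult_right_mono) (auto simp: frac_le)
      finally have "s * ell d1 d2 w \<le> s * r" using s by (rule mult_left_mono)
      then have e: "exp (-(s* r)) \<le> exp (-(s * ell d1 d2 w))" by simp
      have m1: "w powr (a-1) \<le> w powr (a-1) * (1-w) powr (a-1)"
        using mult_left_mono[OF o1, of "w powr (a-1)"] by simp
      have "w powr (a-1) * exp (-(s* r)) \<le> (w powr (a-1) * (1-w) powr (a-1)) * exp (-(s * ell d1 d2 w))"
        using mult_mono[OF m1 e] by simp
      then show ?thesis by (simp add: phi_def)
    qed
  qed
  also have "integral {0..\<eta>} ?F \<le> Kf a d1 d2 s"
    by (rule has_integral_subset_le[OF _ KI2 KI]) (use eta in \<open>auto intro!: mult_nonneg_nonneg phi_nonneg\<close>)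
  finally show ?thesis by (simp add: r_def)
qed

lemma lnK_convex:
  assumes a: "a > 0" and d1: "d1 > 0" and d2: "d2 > 0"
  shows "convex_on {0<..} (\<lambda>s. ln (Kf a d1 d2 s))"
proof (rule convex_onI)
  show "convex ({0<..} :: real set)" by simp
  fix t x y :: real
  assume t: "0 < t" "t < 1" and x: "x \<in> {0<..}" and y: "y \<in> {0<..}"
  then have x0: "x > 0" and y0: "y > 0" by auto
  define s where "s = (1-t)* x + t* y"
  have s0: "s > 0" using t x0 y0 by (simp add: s_def add_pos_pos)
  define A where "A = ln (Kf a d1 d2 x)"
  define B where "B = ln (Kf a d1 d2 y)"
  have KA: "exp A = Kf a d1 d2 x" using Kpos[OF a d1 d2] x0 by (simp add: A_def)
  have KB: "exp B = Kf a d1 d2 y" using Kpos[OF a d1 d2] y0 by (simp add: B_def)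
  let ?F = "\<lambda>z w. phi a w * exp (-(z * ell d1 d2 w))"
  have pw: "?F s w \<le> exp ((1-t)* A + t* B) * ((1-t) * (?F x w / exp A) + t * (?F y w / exp B))" for w
  proof -
    define u where "u = -(x * ell d1 d2 w) - A"
    define v where "v = -(y * ell d1 d2 w) - B"
    have "exp ((1-t)* u + t* v) \<le> (1-t) * exp u + t * exp v"
      using convex_onD[OF exp_convex, of t u v] t by simp
    then have "phi a w * exp ((1-t)* A + t* B) * exp ((1-t)* u + t* v) \<le>
        phi a w * exp ((1-t)* A + t* B) * ((1-t) * exp u + t * exp v)"
      by (rule mult_left_mono) (simp add: phi_nonneg)
    moreover have "exp ((1-t)* A + t* B) * exp ((1-t)* u + t* v) = exp (-(s * ell d1 d2 w))"
      by (simp add: exp_add[symmetric] u_def v_def s_def algebra_simps)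
    moreover have "exp u = exp (-(x * ell d1 d2 w)) / exp A" by (simp add: u_def exp_diff)
    moreover have "exp v = exp (-(y * ell d1 d2 w)) / exp B" by (simp add: v_def exp_diff)
    ultimately show ?thesis by (simp add: algebra_simps)
  qed
  have I: "((\<lambda>w. exp ((1-t)* A + t* B) * ((1-t) * (?F x w / exp A) + t * (?F y w / exp B))) has_integral
      exp ((1-t)* A + t* B) * ((1-t) * (Kf a d1 d2 x / exp A) + t * (Kf a d1 d2 y / exp B))) {0<..<1}"
    using x0 y0
    by (intro has_integral_mult_right has_integral_add has_integral_divide K_has_int a d1 d2) auto
  have "Kf a d1 d2 s \<le> exp ((1-t)* A + t* B) * ((1-t) * (Kf a d1 d2 x / exp A) + t * (Kf a d1 d2 y / exp B))"
    by (rule has_integral_le[OF K_has_int[OF a d1 d2] I]) (use s0 pw in auto)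
  also have "\<dots> = exp ((1-t)* A + t* B)" using KA KB exp_gt_zero[of A] exp_gt_zero[of B] by (simp del: exp_gt_zero)
  finally have Kle: "Kf a d1 d2 s \<le> exp ((1-t)* A + t* B)" .
  have "ln (Kf a d1 d2 s) \<le> ln (exp ((1-t)* A + t* B))"
    using Kle Kpos[OF a d1 d2, of s] s0 by (subst ln_le_cancel_iff) auto
  then have "ln (Kf a d1 d2 s) \<le> (1-t)* A + t* B" by simp
  then show "ln (Kf a d1 d2 ((1 - t) *\<^sub>R x + t *\<^sub>R y)) \<le> (1 - t) * ln (Kf a d1 d2 x) + t * ln (Kf a d1 d2 y)"
    by (simp add: s_def A_def B_def)
qed

lemma h_convex:
  assumes dp: "\<delta> > 0"
  shows "convex_on {0<..} (\<lambda>s::real. ln (s + \<delta>) - ln s)"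
proof (rule convex_on_realI[where f'="\<lambda>s. 1/(s+\<delta>) - 1/s"])
  show "connected ({0<..} :: real set)" by simp
  fix x assume "x \<in> ({0<..} :: real set)"
  then show "((\<lambda>s. ln (s + \<delta>) - ln s) has_real_derivative 1/(x+\<delta>) - 1/x) (at x)"
    using dp by (auto intro!: derivative_eq_intros)
next
  fix x y :: real assume "x \<in> {0<..}" "y \<in> {0<..}" "x \<le> y"
  then have x: "x > 0" "x \<le> y" by auto
  have "\<delta>/(y*(y+\<delta>)) \<le> \<delta>/(x*(x+\<delta>))"
    using x dp by (intro divide_left_mono mult_mono) auto
  moreover have "1/(x+\<delta>) - 1/x = -(\<delta>/(x*(x+\<delta>)))" using x dp by (simp add: field_simps)
  moreover have "1/(y+\<delta>) - 1/y = -(\<delta>/(y*(y+\<delta>)))" using x dp by (simp add: field_simps)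
  ultimately show "1/(x+\<delta>) - 1/x \<le> 1/(y+\<delta>) - 1/y" by simp
qed

lemma neg_ln_convex: "convex_on {0<..} (\<lambda>s::real. - ln s)"
proof (rule convex_on_realI[where f'="\<lambda>s. - (1/s)"])
  show "connected ({0<..} :: real set)" by simp
  fix x assume "x \<in> ({0<..} :: real set)"
  then show "((\<lambda>s. - ln s) has_real_derivative - (1/x)) (at x)"
    by (auto intro!: derivative_eq_intros)
next
  fix x y :: real assume "x \<in> {0<..}" "y \<in> {0<..}" "x \<le> y"
  then show "- (1/x) \<le> - (1/y)" by (simp add: frac_le)
qed

lemma affine_convex: "convex_on {0<..} (\<lambda>s::real. \<beta> * s + g0)"
  by (rule convex_on_realI[where f'="\<lambda>s. \<beta>"]) (auto intro!: derivative_eq_intros)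

definition Vf :: "real \<Rightarrow> real \<Rightarrow> real \<Rightarrow> real \<Rightarrow> real" where
  "Vf a c \<delta> s = ((s+\<delta>)/c) powr (2*a-1) * exp (-((s+\<delta>)/c)) / Gamma (2*a) / c"

lemma Vbound:
  assumes a: "0 < a" "a \<le> 1/2" and c: "c > 0" and dl: "\<delta> > 0" and s: "s > 0"
  shows "Vf a c \<delta> s \<le> s powr (2*a-1) * exp (-((s+\<delta>)/c)) / (c powr (2*a) * Gamma (2*a))"
proof -
  have G: "Gamma (2*a) > 0" using a by simp
  have "((s+\<delta>)/c) powr (2*a-1) \<le> (s/c) powr (2*a-1)"
    by (rule powr_mono2') (use a c dl s in \<open>auto simp: divide_right_mono\<close>)
  moreover have "(s/c) powr (2*a-1) / c = s powr (2*a-1) / c powr (2*a)"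
  proof -
    have "c powr (2*a) = c powr ((2*a-1)+1)" by simp
    also have "\<dots> = c * c powr (2*a-1)" by (rule powr_shift1[OF c])
    finally show ?thesis using c by (simp add: powr_divide)
  qed
  ultimately have "((s+\<delta>)/c) powr (2*a-1) / c \<le> s powr (2*a-1) / c powr (2*a)"
    using c by (metis divide_right_mono less_imp_le)
  then have "((s+\<delta>)/c) powr (2*a-1) / c * (exp (-((s+\<delta>)/c)) / Gamma (2*a)) \<le>
      s powr (2*a-1) / c powr (2*a) * (exp (-((s+\<delta>)/c)) / Gamma (2*a))"
    by (rule mult_right_mono) (use G in simp)
  then show ?thesis by (simp add: Vf_def field_simps)
qed

lemma Vpos: "0 < c \<Longrightarrow> 0 < s + \<delta> \<Longrightarrow> 0 < a \<Longrightarrow> Vf a c \<delta> s > 0"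
  by (simp add: Vf_def)

lemma near0_pos:
  assumes a: "0 < a" "a \<le> 1/2" and d1: "d1 > 0" and d2: "d2 > 0" and c: "c > 0"
    and cd: "d1*d2 \<le> c^2" and dl: "\<delta> > 0" and s: "s > 0" and sl: "s < \<delta>/(c*(1/d1+1/d2))"
  shows "Vf a c \<delta> s < s powr (2*a-1) * Kf a d1 d2 s / ((d1*d2) powr a * Gamma a ^ 2)"
proof -
  define M where "M = 1/d1 + 1/d2"
  have Mp: "M > 0" using d1 d2 unfolding M_def by (intro add_pos_pos) auto
  have G: "Gamma (2*a) > 0" "Gamma a > 0" using a by auto
  have dp: "(d1*d2) powr a > 0" using d1 d2 by simp
  have cp: "(d1*d2) powr a \<le> c powr (2*a)"
  proof -
    have "(d1*d2) powr a \<le> (c^2) powr a" by (rule powr_mono2) (use a d1 d2 cd in auto)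
    also have "(c^2) powr a = c powr (2*a)" using c by (simp add: powr_powr[symmetric] powr_realpow)
    finally show ?thesis .
  qed
  have cm: "c*M > 0" using c Mp by simp
  have "s < \<delta>/(c*M)" using sl by (simp add: M_def)
  then have "s*(c*M) < \<delta>" by (rule pos_less_divide_eq[OF cm, THEN iffD1])
  then have "s*M*c < \<delta>" by (simp add: mult_ac)
  then have "s*M < (s+\<delta>)/c" using c s by (simp add: field_simps)
  then have ex: "exp (-((s+\<delta>)/c)) < exp (-(s*M))" by simp
  have "Vf a c \<delta> s \<le> s powr (2*a-1) * exp (-((s+\<delta>)/c)) / (c powr (2*a) * Gamma (2*a))"
    by (rule Vbound[OF a c dl s])
  also have "\<dots> \<le> s powr (2*a-1) * exp (-((s+\<delta>)/c)) / ((d1*d2) powr a * Gamma (2*a))"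
    using cp dp G s by (intro divide_left_mono mult_right_mono mult_pos_pos) auto
  also have "\<dots> < s powr (2*a-1) * exp (-(s*M)) / ((d1*d2) powr a * Gamma (2*a))"
    using ex dp G s by (intro divide_strict_right_mono mult_strict_left_mono mult_pos_pos) auto
  also have "\<dots> = s powr (2*a-1) * (exp (-(s*M)) * Beta a a) / ((d1*d2) powr a * Gamma a ^ 2)"
    using G dp by (simp add: Beta_def power2_eq_square mult_2 field_simps)
  also have "\<dots> \<le> s powr (2*a-1) * Kf a d1 d2 s / ((d1*d2) powr a * Gamma a ^ 2)"
    using Klow[OF a(1) d1 d2, of s] s dp G unfolding M_def
    by (intro divide_right_mono mult_left_mono) auto
  finally show ?thesis .
qed

lemma inf_pos:
  assumes a: "0 < a" "a \<le> 1/2" and d1: "d1 > 0" and d12: "d1 < d2" and c: "c > 0" and cd2: "c < d2"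
    and dl: "\<delta> > 0"
  shows "\<exists>N. \<forall>s>N. Vf a c \<delta> s < s powr (2*a-1) * Kf a d1 d2 s / ((d1*d2) powr a * Gamma a ^ 2)"
proof -
  have d2: "d2 > 0" using d1 d12 by simp
  have k0: "1/d1 - 1/d2 > 0" using d1 d12 by (simp add: frac_less2)
  have k1: "1/c - 1/d2 > 0" using c cd2 by (simp add: frac_less2)
  define \<eta> where "\<eta> = min (1/2) ((1/c - 1/d2)/(2*(1/d1 - 1/d2)))"
  have eta: "0 < \<eta>" "\<eta> < 1" using k0 k1 by (auto simp: \<eta>_def)
  define r where "r = 1/d2 + \<eta> * (1/d1 - 1/d2)"
  have "\<eta> * (1/d1 - 1/d2) \<le> (1/c - 1/d2)/2"
  proof -
    have "\<eta> \<le> (1/c - 1/d2)/(2*(1/d1 - 1/d2))" by (simp add: \<eta>_def)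
    then have "\<eta> * (1/d1 - 1/d2) \<le> (1/c - 1/d2)/(2*(1/d1 - 1/d2)) * (1/d1 - 1/d2)"
      using k0 by (rule mult_right_mono[OF _ less_imp_le])
    also have "\<dots> = (1/c - 1/d2)/2"
    proof -
      have h: "X/(2*Y)*Y = X/2" if "Y > 0" for X Y :: real using that by (simp add: field_simps)
      show ?thesis by (rule h[OF k0])
    qed
    finally show ?thesis .
  qed
  moreover have h: "0 < Y - (Z + X)" if "X \<le> (Y - Z)/2" "0 < Y - Z" for X Y Z :: real using that by (simp add: field_simps)
  ultimately have kr: "1/c - r > 0" using k1 unfolding r_def by blast
  have G: "Gamma (2*a) > 0" "Gamma a > 0" using a by auto
  have dp: "(d1*d2) powr a > 0" using d1 d2 by simp
  define P where "P = 1 / (c powr (2*a) * Gamma (2*a))"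
  define R0 where "R0 = \<eta> powr a / a / ((d1*d2) powr a * Gamma a ^ 2)"
  have Pp: "P > 0" using c G by (simp add: P_def)
  have Rp: "R0 > 0" unfolding R0_def by (intro divide_pos_pos mult_pos_pos zero_less_power) (use eta a dp G in auto)
  define N where "N = max 0 ((P/R0)/(1/c - r))"
  show ?thesis
  proof (intro exI allI impI)
    fix s :: real assume sN: "s > N"
    then have s: "s > 0" by (simp add: N_def)
    have "(P/R0)/(1/c - r) < s" using sN by (simp add: N_def)
    then have "P/R0 < s * (1/c - r)" by (rule pos_divide_less_eq[OF kr, THEN iffD1])
    also have "\<dots> < exp (s * (1/c - r))" using exp_ge_add_one_self[of "s * (1/c - r)"] by linarith
    finally have "P/R0 < exp (s * (1/c - r))" .
    then have "P < exp (s * (1/c - r)) * R0" by (rule pos_divide_less_eq[OF Rp, THEN iffD1])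
    then have "P < R0 * exp (s * (1/c - r))" by (simp add: mult.commute)
    then have "P * exp (-(s/c)) < R0 * exp (s * (1/c - r)) * exp (-(s/c))" by simp
    also have "R0 * exp (s * (1/c - r)) * exp (-(s/c)) = R0 * exp (-(s*r))"
      by (simp add: mult.assoc exp_add[symmetric] algebra_simps)
    finally have key: "P * exp (-(s/c)) < R0 * exp (-(s*r))" .
    have sp: "s powr (2*a-1) > 0" using s by simp
    have "Vf a c \<delta> s \<le> s powr (2*a-1) * exp (-((s+\<delta>)/c)) / (c powr (2*a) * Gamma (2*a))"
      by (rule Vbound[OF a c dl s])
    also have "\<dots> = s powr (2*a-1) * (P * exp (-((s+\<delta>)/c)))" by (simp add: P_def)
    also have "\<dots> \<le> s powr (2*a-1) * (P * exp (-(s/c)))"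
      using Pp dl c sp by (intro mult_left_mono) (auto simp: divide_right_mono)
    also have "\<dots> < s powr (2*a-1) * (R0 * exp (-(s*r)))"
      using key sp by simp
    also have "\<dots> = s powr (2*a-1) * (\<eta> powr a / a * exp (-(s * r))) / ((d1*d2) powr a * Gamma a ^ 2)"
      by (simp add: R0_def)
    also have "\<dots> \<le> s powr (2*a-1) * Kf a d1 d2 s / ((d1*d2) powr a * Gamma a ^ 2)"
      using Kinf[OF a(1) _ d1 d12 _ eta, of s] a s sp dp G unfolding r_def
      by (intro divide_right_mono mult_left_mono) auto
    finally show "Vf a c \<delta> s < s powr (2*a-1) * Kf a d1 d2 s / ((d1*d2) powr a * Gamma a ^ 2)" .
  qed
qed

lemma powr_split: "(s::real) > 0 \<Longrightarrow> s powr (2*a-1) = s powr (a-1) * s powr a"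
  by (simp add: powr_add[symmetric])

lemma U0_form: "(s::real) > 0 \<Longrightarrow> d2 > 0 \<Longrightarrow>
   (s/d2) powr (a-1) * exp (-(s/d2)) / Gamma a / d2 = s powr (a-1) * exp (-(s/d2)) / (d2 powr a * Gamma a)"
proof -
  assume s: "s > 0" and d2: "d2 > 0"
  have "d2 powr a = d2 powr ((a-1)+1)" by simp
  also have "\<dots> = d2 * d2 powr (a-1)" by (rule powr_shift1[OF d2])
  finally show ?thesis using d2 by (simp add: powr_divide field_simps)
qed

lemma near0_zero:
  assumes a: "0 < a" "a \<le> 1/2" and d2: "d2 > 0" and c: "c > 0" and dl: "\<delta> > 0"
  shows "\<exists>\<epsilon>>0. \<forall>s. 0 < s \<and> s < \<epsilon> \<longrightarrow> Vf a c \<delta> s < (s/d2) powr (a-1) * exp (-(s/d2)) / Gamma a / d2"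
proof -
  have G: "Gamma (2*a) > 0" "Gamma a > 0" using a by auto
  define Z where "Z = exp (-1) * c powr (2*a) * Gamma (2*a) / (d2 powr a * Gamma a)"
  have Zp: "Z > 0" using G c d2 by (simp add: Z_def)
  define \<epsilon> where "\<epsilon> = min d2 (Z powr (1/a))"
  have ep: "\<epsilon> > 0" using d2 Zp by (simp add: \<epsilon>_def)
  show ?thesis
  proof (intro exI[of _ \<epsilon>] conjI allI impI ep)
    fix s :: real assume "0 < s \<and> s < \<epsilon>"
    then have s: "0 < s" "s < d2" "s < Z powr (1/a)" by (auto simp: \<epsilon>_def)
    have "s powr a < (Z powr (1/a)) powr a" by (rule powr_less_mono2) (use a s in auto)
    also have "\<dots> = Z" using a Zp by (simp add: powr_powr)
    finally have sa: "s powr a < Z" .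
    have cp: "c powr (2*a) * Gamma (2*a) > 0" using c G by simp
    have sp: "s powr (a-1) > 0" using s by simp
    have "Vf a c \<delta> s \<le> s powr (2*a-1) * exp (-((s+\<delta>)/c)) / (c powr (2*a) * Gamma (2*a))"
      by (rule Vbound[OF a c dl s(1)])
    also have "\<dots> \<le> s powr (2*a-1) * 1 / (c powr (2*a) * Gamma (2*a))"
      using s dl c cp by (intro divide_right_mono mult_left_mono) auto
    also have "\<dots> = s powr (a-1) * (s powr a / (c powr (2*a) * Gamma (2*a)))"
      using powr_split[OF s(1)] by simp
    also have "\<dots> < s powr (a-1) * (Z / (c powr (2*a) * Gamma (2*a)))"
      using sa sp cp by (intro mult_strict_left_mono divide_strict_right_mono) auto
    also have "Z / (c powr (2*a) * Gamma (2*a)) = exp (-1) / (d2 powr a * Gamma a)"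
      using cp c d2 G by (simp add: Z_def field_simps)
    also have "s powr (a-1) * (exp (-1) / (d2 powr a * Gamma a)) \<le> s powr (a-1) * (exp (-(s/d2)) / (d2 powr a * Gamma a))"
      using s d2 G sp by (intro mult_left_mono divide_right_mono) (auto simp: field_simps)
    also have "\<dots> = (s/d2) powr (a-1) * exp (-(s/d2)) / Gamma a / d2"
      using U0_form[OF s(1) d2] by simp
    finally show "Vf a c \<delta> s < (s/d2) powr (a-1) * exp (-(s/d2)) / Gamma a / d2" .
  qed
qed

lemma inf_zero:
  assumes a: "0 < a" "a \<le> 1/2" and d2: "d2 > 0" and c: "c > 0" and cd2: "c < d2" and dl: "\<delta> > 0"
  shows "\<exists>N. \<forall>s>N. Vf a c \<delta> s < (s/d2) powr (a-1) * exp (-(s/d2)) / Gamma a / d2"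
proof -
  have G: "Gamma (2*a) > 0" "Gamma a > 0" using a by auto
  define k where "k = 1/c - 1/d2"
  have kp: "k > 0" using c cd2 by (simp add: k_def frac_less2)
  define P where "P = 1 / (c powr (2*a) * Gamma (2*a))"
  define R where "R = 1 / (d2 powr a * Gamma a)"
  have Pp: "P > 0" using c G by (simp add: P_def)
  have Rp: "R > 0" using d2 G by (simp add: R_def)
  define N where "N = max 1 (4*P/(R*k^2))"
  show ?thesis
  proof (intro exI allI impI)
    fix s :: real assume sN: "s > N"
    then have s: "s > 0" "s \<ge> 1" by (auto simp: N_def)
    have sN2: "4*P/(R*k^2) < s" using sN by (simp add: N_def)
    have sk: "s*k > 0" using s kp by simp
    have e1: "s*k/2 < exp (s*k/2)" using exp_ge_add_one_self[of "s*k/2"] by linarith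
    have "(s*k/2)^2 < (exp (s*k/2))^2" by (rule power_strict_mono[OF e1]) (use sk in auto)
    also have "(exp (s*k/2))^2 = exp (s*k)" by (simp add: power2_eq_square exp_add[symmetric])
    finally have e2: "(s*k/2)^2 < exp (s*k)" .
    have "s * exp (-(s*k)) * P = s * P / exp (s*k)" by (simp add: exp_minus field_simps)
    also have "\<dots> < s * P / ((s*k/2)^2)"
      using e2 s Pp sk by (intro divide_strict_left_mono mult_pos_pos) auto
    also have "\<dots> = 4*P/(s*k^2)" using s kp by (simp add: field_simps power2_eq_square)
    also have "\<dots> < R"
    proof -
      have "4*P < s * (R*k^2)" using sN2 Rp kp by (simp add: pos_divide_less_eq mult.commute)
      then show ?thesis using s kp by (simp add: pos_divide_less_eq mult_ac)
    qed
    finally have key: "s * exp (-(s*k)) * P < R" .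
    have sp: "s powr (a-1) > 0" using s by simp
    have "Vf a c \<delta> s \<le> s powr (2*a-1) * exp (-((s+\<delta>)/c)) / (c powr (2*a) * Gamma (2*a))"
      by (rule Vbound[OF a c dl s(1)])
    also have "\<dots> = s powr (a-1) * (s powr a * exp (-((s+\<delta>)/c)) * P)"
      using powr_split[OF s(1)] by (simp add: P_def)
    also have "\<dots> \<le> s powr (a-1) * (s * exp (-(s/c)) * P)"
    proof -
      have "s powr a \<le> s powr 1" by (rule powr_mono) (use a s in auto)
      then have "s powr a \<le> s" using s by simp
      moreover have "exp (-((s+\<delta>)/c)) \<le> exp (-(s/c))" using dl c by (simp add: divide_right_mono)
      ultimately have "s powr a * exp (-((s+\<delta>)/c)) \<le> s * exp (-(s/c))"
        using s by (intro mult_mono) auto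
      then show ?thesis using sp Pp by (intro mult_left_mono mult_right_mono) auto
    qed
    also have "s * exp (-(s/c)) * P = exp (-(s/d2)) * (s * exp (-(s*k)) * P)"
      by (simp add: k_def exp_add[symmetric] algebra_simps)
    also have "s powr (a-1) * (exp (-(s/d2)) * (s * exp (-(s*k)) * P)) < s powr (a-1) * (exp (-(s/d2)) * R)"
      using key sp by simp
    also have "\<dots> = (s/d2) powr (a-1) * exp (-(s/d2)) / Gamma a / d2"
      using U0_form[OF s(1) d2] by (simp add: R_def)
    finally show "Vf a c \<delta> s < (s/d2) powr (a-1) * exp (-(s/d2)) / Gamma a / d2" .
  qed
qed

lemma cfacts:
  fixes d1 d2 :: real
  assumes d: "0 \<le> d1" "d1 < d2"
  defines "c \<equiv> sqrt ((d1^2 + d2^2)/2)"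
  shows "c > 0" "c < d2" "d1*d2 \<le> c^2" "d1 + d2 < 2*c" "sqrt (2*(d1^2 + d2^2)) = 2*c"
proof -
  have d2: "d2 > 0" using d by simp
  have A: "(d1^2 + d2^2)/2 \<ge> 0" by simp
  have c2: "c^2 = (d1^2 + d2^2)/2" unfolding c_def using A by simp
  show "c > 0" unfolding c_def using d2 by (intro real_sqrt_gt_zero) (simp add: add_nonneg_pos)
  have "d1^2 < d2^2" using d by (intro power_strict_mono) auto
  then have "(d1^2 + d2^2)/2 < d2^2" by simp
  then have "sqrt ((d1^2 + d2^2)/2) < sqrt (d2^2)" by (simp only: real_sqrt_less_iff)
  then show "c < d2" using d2 unfolding c_def by simp
  have "0 \<le> (d1 - d2)^2" by simp
  then show "d1*d2 \<le> c^2" unfolding c2 by (simp add: power2_eq_square algebra_simps)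
  have "0 < (d1 - d2)^2" using d by simp
  then have "((d1+d2)/2)^2 < (d1^2 + d2^2)/2" by (simp add: power2_eq_square algebra_simps)
  then have "(d1+d2)/2 < c" unfolding c_def by (rule real_less_rsqrt)
  then show "d1 + d2 < 2*c" by simp
  have "sqrt (2*(d1^2 + d2^2)) = sqrt (2^2 * ((d1^2 + d2^2)/2))" by simp
  also have "\<dots> = 2 * c" unfolding c_def by (simp only: real_sqrt_mult) simp
  finally show "sqrt (2*(d1^2 + d2^2)) = 2*c" .
qed

lemma exists_pos:
  fixes a d1 d2 :: real
  assumes a: "0 < a" "a \<le> 1/2" and d: "0 \<le> d1" "d1 < d2"
  defines "c \<equiv> sqrt ((d1^2 + d2^2)/2)"
  shows "\<exists>x > -a*(d1+d2). lincomb_dens a c c x > lincomb_dens a d1 d2 x"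
proof (rule ccontr)
  assume H: "\<not> ?thesis"
  have d2: "d2 > 0" using d by simp
  note cf = cfacts[OF d, folded c_def]
  define x0 where "x0 = -a*(d1+d2)"
  have "a*(d1+d2) < a*(2*c)" using cf(4) a by (intro mult_strict_left_mono) auto
  then have dl: "2*a*c + x0 > 0" by (simp add: x0_def algebra_simps)
  have x0n: "x0 \<le> 0" using a d by (simp add: x0_def)
  have le: "lincomb_dens a c c x \<le> lincomb_dens a d1 d2 x" if "x > x0" for x
  proof -
    have "\<not> (lincomb_dens a c c x > lincomb_dens a d1 d2 x)" using H that unfolding x0_def by blast
    then show ?thesis by simp
  qed
  have fV: "lincomb_dens a c c x = scaled_centered_dens (2*a) c x" for x by (rule fV_eq[OF a(1) cf(1)])
  have "ennreal (-x0) < (\<integral>\<^sup>+x. ennreal ((x - x0) * scaled_centered_dens (2*a) c x) \<partial>lborel)"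
    by (rule MV_bound[OF a cf(1) dl x0n])
  also have "\<dots> \<le> (\<integral>\<^sup>+x. ennreal ((x + a*(d1+d2)) * lincomb_dens a d1 d2 x) \<partial>lborel)"
  proof (intro nn_integral_mono)
    fix x :: real
    show "ennreal ((x - x0) * scaled_centered_dens (2*a) c x) \<le> ennreal ((x + a*(d1+d2)) * lincomb_dens a d1 d2 x)"
    proof (cases "x > x0")
      case True
      then have "(x - x0) * scaled_centered_dens (2*a) c x \<le> (x - x0) * lincomb_dens a d1 d2 x"
        using le[OF True] fV by (intro mult_left_mono) auto
      then show ?thesis by (simp add: x0_def ennreal_leI)
    next
      case False
      have "(x - x0) * scaled_centered_dens (2*a) c x \<le> 0"
        using False scd_nonneg[of "2*a" c x] a cf(1) by (intro mult_nonpos_nonneg) auto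
      then show ?thesis by (simp add: ennreal_neg)
    qed
  qed
  also have "\<dots> = ennreal (a*(d1+d2))" by (rule MU_bound[OF a(1) d(1) d2])
  finally show False by (simp add: x0_def)
qed

lemma convex_on_eqI:
  fixes f g :: "real \<Rightarrow> real"
  assumes "convex_on S f" "\<And>x. x \<in> S \<Longrightarrow> f x = g x"
  shows "convex_on S g"
proof -
  have cS: "convex S" using assms(1) by (simp add: convex_on_def)
  show ?thesis
  proof (rule convex_onI[OF _ cS])
    fix t x y :: real assume t: "0 < t" "t < 1" and xy: "x \<in> S" "y \<in> S"
    have m: "(1 - t) *\<^sub>R x + t *\<^sub>R y \<in> S" using convexD[OF cS xy, of "1-t" t] t by simp
    have "f ((1 - t) *\<^sub>R x + t *\<^sub>R y) \<le> (1 - t) * f x + t * f y"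
      using convex_onD[OF assms(1), of t x y] t xy by simp
    then show "g ((1 - t) *\<^sub>R x + t *\<^sub>R y) \<le> (1 - t) * g x + t * g y"
      using assms(2)[OF m] assms(2)[OF xy(1)] assms(2)[OF xy(2)] by simp
  qed
qed

lemma lnV:
  fixes a c s \<delta> :: real
  assumes a: "0 < a" and c: "c > 0" and p: "s + \<delta> > 0"
  shows "ln (Vf a c \<delta> s) = (2*a-1)*(ln (s+\<delta>) - ln c) - (s+\<delta>)/c - ln (Gamma (2*a)) - ln c"
proof -
  have G: "Gamma (2*a) > 0" using a by simp
  have q: "(s+\<delta>)/c > 0" using p c by simp
  have "ln (Vf a c \<delta> s) = ln (((s+\<delta>)/c) powr (2*a-1)) + ln (exp (-((s+\<delta>)/c))) - ln (Gamma (2*a)) - ln c"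
    unfolding Vf_def using q G c p by (simp add: ln_div ln_mult)
  also have "\<dots> = (2*a-1)*(ln (s+\<delta>) - ln c) - (s+\<delta>)/c - ln (Gamma (2*a)) - ln c"
    using p c by (simp add: ln_div)
  finally show ?thesis .
qed

lemma lnU1:
  fixes a d1 d2 s :: real
  assumes a: "0 < a" and d1: "d1 > 0" and d2: "d2 > 0" and s: "s > 0"
  shows "ln (s powr (2*a-1) * Kf a d1 d2 s / ((d1*d2) powr a * Gamma a ^ 2)) =
     (2*a-1) * ln s + ln (Kf a d1 d2 s) - ln ((d1*d2) powr a * Gamma a ^ 2)"
proof -
  have K: "Kf a d1 d2 s > 0" using Kpos[OF a d1 d2] s by simp
  have D: "(d1*d2) powr a * Gamma a ^ 2 > 0" using a d1 d2 by (intro mult_pos_pos zero_less_power) auto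
  have G: "Gamma a > 0" using a by simp
  show ?thesis using K D s d1 d2 G by (simp add: ln_div ln_mult)
qed

lemma lnU0:
  fixes a d2 s :: real
  assumes a: "0 < a" and d2: "d2 > 0" and s: "s > 0"
  shows "ln ((s/d2) powr (a-1) * exp (-(s/d2)) / Gamma a / d2) =
     (a-1) * (ln s - ln d2) - s/d2 - ln (Gamma a) - ln d2"
proof -
  have G: "Gamma a > 0" using a by simp
  have q: "s/d2 > 0" using s d2 by simp
  have "ln ((s/d2) powr (a-1) * exp (-(s/d2)) / Gamma a / d2) =
      ln ((s/d2) powr (a-1)) + ln (exp (-(s/d2))) - ln (Gamma a) - ln d2"
    using q G d2 s by (simp add: ln_div ln_mult)
  also have "\<dots> = (a-1) * (ln s - ln d2) - s/d2 - ln (Gamma a) - ln d2"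
    using s d2 by (simp add: ln_div)
  finally show ?thesis .
qed

lemma core:
  fixes a d1 d2 :: real
  assumes a: "0 < a" "a \<le> 1/2" and d: "0 \<le> d1" "d1 < d2"
  defines "c \<equiv> sqrt ((d1^2 + d2^2)/2)"
  shows "\<exists>x0 x1 x2. x0 < x1 \<and> x1 < x2 \<and> x0 = - a * (d1 + d2) \<and>
     (\<forall>x \<in> {- a * sqrt (2 * (d1^2 + d2^2)) <..< x0} \<union> {x1 <..< x2}. lincomb_dens a c c x - lincomb_dens a d1 d2 x > 0) \<and>
     (\<forall>x \<in> {x0 <..< x1} \<union> {x2 <..}. lincomb_dens a c c x - lincomb_dens a d1 d2 x < 0)"
proof -
  have d2: "d2 > 0" using d by simp
  note cf = cfacts[OF d, folded c_def]
  have c: "c > 0" by (rule cf(1))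
  define x0 where "x0 = - a * (d1 + d2)"
  define \<delta> where "\<delta> = 2*a*c + x0"
  have "a*(d1+d2) < a*(2*c)" using cf(4) a by (intro mult_strict_left_mono) auto
  then have dl: "\<delta> > 0" by (simp add: x0_def \<delta>_def algebra_simps)
  have G: "Gamma a > 0" "Gamma (2*a) > 0" using a by auto
  define U where "U s = lincomb_dens a d1 d2 (x0 + s)" for s
  define V where "V s = Vf a c \<delta> s" for s
  have fVs: "lincomb_dens a c c (x0 + s) = V s" if s: "s > 0" for s
  proof -
    have e: "(x0 + s)/c + 2*a = (s+\<delta>)/c" using c by (simp add: \<delta>_def field_simps)
    have p: "(s+\<delta>)/c > 0" using s dl c by simp
    show ?thesis
      unfolding fV_eq[OF a(1) c] V_def Vf_def scaled_centered_dens_def e gamma_dens_def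
      using p by (simp add: exp_minus field_simps)
  qed
  have Vp: "V s > 0" if "s > 0" for s unfolding V_def using Vpos[OF c _ a(1)] that dl by simp
  have U0e: "U s = (s/d2) powr (a-1) * exp (-(s/d2)) / Gamma a / d2" if "d1 = 0" "s > 0" for s
  proof -
    have e: "(x0 + s)/d2 + a = s/d2" using d2 that by (simp add: x0_def field_simps)
    show ?thesis using that d2
      unfolding U_def lincomb_dens_def scaled_centered_dens_def
      by (simp add: e gamma_dens_def)
  qed
  have U1e: "U s = s powr (2*a-1) * Kf a d1 d2 s / ((d1*d2) powr a * Gamma a ^ 2)" if "d1 > 0" "s > 0" for s
  proof -
    have "U s = convval a d1 d2 (x0 + s)"
      unfolding U_def lincomb_dens_def using that d2 conv_eq[OF a(1) that(1) d2] by simp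
    also have "\<dots> = s powr (2*a-1) * Kf a d1 d2 s / ((d1*d2) powr a * Gamma a ^ 2)"
      using that by (simp add: convval_def x0_def)
    finally show ?thesis .
  qed
  have Up: "U s > 0" if s: "s > 0" for s
  proof (cases "d1 = 0")
    case True then show ?thesis using U0e[OF True s] s d2 G by simp
  next
    case False
    then have d1p: "d1 > 0" using d by simp
    have "Kf a d1 d2 s > 0" using Kpos[OF a(1) d1p d2] s by simp
    moreover have "(d1*d2) powr a * Gamma a ^ 2 > 0" using d1p d2 G by (intro mult_pos_pos zero_less_power) auto
    ultimately show ?thesis using U1e[OF d1p s] s by simp
  qed
  define Q where "Q s = ln (U s) - ln (V s)" for s
  have Qpos: "Q s > 0 \<longleftrightarrow> V s < U s" if "s > 0" for s
    using Up[OF that] Vp[OF that] by (simp add: Q_def)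
  have Qneg: "Q s < 0 \<longleftrightarrow> U s < V s" if "s > 0" for s
    using Up[OF that] Vp[OF that] by (simp add: Q_def)
  have Qconv: "convex_on {0<..} Q"
  proof (cases "d1 = 0")
    case True
    define g0 where "g0 = -(a-1) * ln d2 - ln (Gamma a) - ln d2 + (2*a-1) * ln c + \<delta>/c + ln (Gamma (2*a)) + ln c"
    have cv: "convex_on {0<..} (\<lambda>s. (1-2*a) * (ln (s+\<delta>) - ln s) + (a * (- ln s) + ((1/c - 1/d2) * s + g0)))"
      using a by (intro convex_on_add convex_on_cmul h_convex[OF dl] neg_ln_convex affine_convex) auto
    show ?thesis
    proof (rule convex_on_eqI[OF cv])
      fix s :: real assume "s \<in> {0<..}"
      then have s: "s > 0" by simp
      have p: "s + \<delta> > 0" using s dl by simp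
      have "Q s = (a-1) * (ln s - ln d2) - s/d2 - ln (Gamma a) - ln d2 -
          ((2*a-1)*(ln (s+\<delta>) - ln c) - (s+\<delta>)/c - ln (Gamma (2*a)) - ln c)"
        unfolding Q_def U0e[OF True s] V_def lnU0[OF a(1) d2 s] lnV[OF a(1) c p] by simp
      also have "\<dots> = (1-2*a) * (ln (s+\<delta>) - ln s) + (a * (- ln s) + ((1/c - 1/d2) * s + g0))"
        by (simp add: g0_def algebra_simps diff_divide_distrib add_divide_distrib)
      finally show "(1-2*a) * (ln (s+\<delta>) - ln s) + (a * (- ln s) + ((1/c - 1/d2) * s + g0)) = Q s" by simp
    qed
  next
    case False
    then have d1p: "d1 > 0" using d by simp
    define g1 where "g1 = \<delta>/c - ln ((d1*d2) powr a * Gamma a ^ 2) + (2*a-1) * ln c + ln (Gamma (2*a)) + ln c"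
    have cv: "convex_on {0<..} (\<lambda>s. (1-2*a) * (ln (s+\<delta>) - ln s) + (ln (Kf a d1 d2 s) + ((1/c) * s + g1)))"
      using a by (intro convex_on_add convex_on_cmul h_convex[OF dl] lnK_convex[OF a(1) d1p d2] affine_convex) auto
    show ?thesis
    proof (rule convex_on_eqI[OF cv])
      fix s :: real assume "s \<in> {0<..}"
      then have s: "s > 0" by simp
      have p: "s + \<delta> > 0" using s dl by simp
      have "Q s = (2*a-1) * ln s + ln (Kf a d1 d2 s) - ln ((d1*d2) powr a * Gamma a ^ 2) -
          ((2*a-1)*(ln (s+\<delta>) - ln c) - (s+\<delta>)/c - ln (Gamma (2*a)) - ln c)"
        unfolding Q_def U1e[OF d1p s] V_def lnU1[OF a(1) d1p d2 s] lnV[OF a(1) c p] by simp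
      also have "\<dots> = (1-2*a) * (ln (s+\<delta>) - ln s) + (ln (Kf a d1 d2 s) + ((1/c) * s + g1))"
        by (simp add: g1_def algebra_simps diff_divide_distrib add_divide_distrib)
      finally show "(1-2*a) * (ln (s+\<delta>) - ln s) + (ln (Kf a d1 d2 s) + ((1/c) * s + g1)) = Q s" by simp
    qed
  qed
  have near: "\<exists>\<epsilon>>0. \<forall>s. 0 < s \<and> s < \<epsilon> \<longrightarrow> V s < U s"
  proof (cases "d1 = 0")
    case True
    obtain \<epsilon> where "\<epsilon> > 0" "\<forall>s. 0 < s \<and> s < \<epsilon> \<longrightarrow> Vf a c \<delta> s < (s/d2) powr (a-1) * exp (-(s/d2)) / Gamma a / d2"
      using near0_zero[OF a d2 c dl] by blast
    then show ?thesis using U0e[OF True] unfolding V_def by auto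
  next
    case False
    then have d1p: "d1 > 0" using d by simp
    define \<epsilon> where "\<epsilon> = \<delta>/(c*(1/d1+1/d2))"
    have "\<epsilon> > 0" using dl c d1p d2 by (simp add: \<epsilon>_def add_pos_pos)
    moreover have "V s < U s" if "0 < s \<and> s < \<epsilon>" for s
      using near0_pos[OF a d1p d2 c cf(3) dl, of s] that U1e[OF d1p, of s] unfolding V_def \<epsilon>_def by simp
    ultimately show ?thesis by blast
  qed
  have inf: "\<exists>N. \<forall>s>N. V s < U s"
  proof (cases "d1 = 0")
    case True
    obtain N where N: "\<forall>s>N. Vf a c \<delta> s < (s/d2) powr (a-1) * exp (-(s/d2)) / Gamma a / d2"
      using inf_zero[OF a d2 c cf(2) dl] by blast
    show ?thesis
    proof (intro exI[of _ "max N 0"] allI impI)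
      fix s assume "s > max N 0"
      then show "V s < U s" using N U0e[OF True, of s] unfolding V_def by auto
    qed
  next
    case False
    then have d1p: "d1 > 0" using d by simp
    obtain N where N: "\<forall>s>N. Vf a c \<delta> s < s powr (2*a-1) * Kf a d1 d2 s / ((d1*d2) powr a * Gamma a ^ 2)"
      using inf_pos[OF a d1p d(2) c cf(2) dl] by blast
    show ?thesis
    proof (intro exI[of _ "max N 0"] allI impI)
      fix s assume "s > max N 0"
      then show "V s < U s" using N U1e[OF d1p, of s] unfolding V_def by auto
    qed
  qed
  obtain xp where xp: "xp > x0" "lincomb_dens a c c xp > lincomb_dens a d1 d2 xp"
    using exists_pos[OF a d] unfolding c_def[symmetric] x0_def by auto
  define s0 where "s0 = xp - x0"
  have s0: "s0 > 0" using xp by (simp add: s0_def)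
  have "U s0 < V s0" using xp fVs[OF s0] unfolding U_def s0_def by simp
  then have Qs0: "Q s0 < 0" using Qneg[OF s0] by simp
  obtain \<epsilon> where eps: "\<epsilon> > 0" "\<forall>s. 0 < s \<and> s < \<epsilon> \<longrightarrow> V s < U s" using near by blast
  obtain N where N: "\<forall>s>N. V s < U s" using inf by blast
  obtain s1 s2 where ss: "0 < s1" "s1 < s2" "\<forall>s. 0 < s \<and> s < s1 \<longrightarrow> Q s > 0"
      "\<forall>s. s1 < s \<and> s < s2 \<longrightarrow> Q s < 0" "\<forall>s. s > s2 \<longrightarrow> Q s > 0"
  proof -
    have "\<exists>s1 s2. 0 < s1 \<and> s1 < s2 \<and> (\<forall>s. 0 < s \<and> s < s1 \<longrightarrow> Q s > 0) \<and>
       (\<forall>s. s1 < s \<and> s < s2 \<longrightarrow> Q s < 0) \<and> (\<forall>s. s > s2 \<longrightarrow> Q s > 0)"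
    proof (rule sign_pattern[OF Qconv eps(1) _ _ s0 Qs0])
      show "Q s > 0" if "0 < s" "s < \<epsilon>" for s using eps(2) that Qpos[OF that(1)] by blast
      show "Q s > 0" if "s > max N 0" for s
      proof -
        have "V s < U s" using N that by simp
        moreover have "s > 0" using that by simp
        ultimately show ?thesis using Qpos by blast
      qed
    qed
    then show ?thesis using that by blast
  qed
  have Ule: "lincomb_dens a d1 d2 x = 0" if "x \<le> x0" for x
  proof (cases "d1 = 0")
    case True
    have "x/d2 + a \<le> 0" using that True d2 by (simp add: x0_def field_simps)
    then show ?thesis using True d2
      by (simp add: lincomb_dens_def scaled_centered_dens_def gamma_dens_def)
  next
    case False
    then have d1p: "d1 > 0" using d by simp
    have "x + a*(d1+d2) \<le> 0" using that by (simp add: x0_def)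
    then show ?thesis using d1p d2 conv_eq[OF a(1) d1p d2, of x]
      by (simp add: lincomb_dens_def convval_def)
  qed
  have fVpos: "lincomb_dens a c c x > 0" if "x > - a * sqrt (2 * (d1^2 + d2^2))" for x
  proof -
    have "x > -(2*a*c)" using that cf(5) by simp
    then have "x/c + 2*a > 0" using c by (simp add: field_simps)
    then show ?thesis unfolding fV_eq[OF a(1) c] scaled_centered_dens_def gamma_dens_def
      using c G by simp
  qed
  have diff: "lincomb_dens a c c x - lincomb_dens a d1 d2 x = V (x - x0) - U (x - x0)" if "x > x0" for x
    using fVs[of "x - x0"] that unfolding U_def by simp
  have P1: "\<forall>x \<in> {- a * sqrt (2 * (d1^2 + d2^2)) <..< x0} \<union> {x0 + s1 <..< x0 + s2}. lincomb_dens a c c x - lincomb_dens a d1 d2 x > 0"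
  proof
    fix x assume x: "x \<in> {- a * sqrt (2 * (d1^2 + d2^2)) <..< x0} \<union> {x0 + s1 <..< x0 + s2}"
    show "lincomb_dens a c c x - lincomb_dens a d1 d2 x > 0"
    proof (cases "x < x0")
      case True
      then show ?thesis using x Ule[of x] fVpos[of x] ss(1) by auto
    next
      case False
      then have x1: "x0 + s1 < x" "x < x0 + s2" using x ss by auto
      then have "Q (x - x0) < 0" using ss(4) by auto
      then have "U (x - x0) < V (x - x0)" using Qneg[of "x - x0"] x1 ss by auto
      then show ?thesis using diff[of x] x1 ss by auto
    qed
  qed
  have P2: "\<forall>x \<in> {x0 <..< x0 + s1} \<union> {x0 + s2 <..}. lincomb_dens a c c x - lincomb_dens a d1 d2 x < 0"
  proof
    fix x assume x: "x \<in> {x0 <..< x0 + s1} \<union> {x0 + s2 <..}"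
    then have xg: "x > x0" using ss by auto
    have "Q (x - x0) > 0" using x ss by auto
    then have "V (x - x0) < U (x - x0)" using Qpos[of "x - x0"] xg by auto
    then show "lincomb_dens a c c x - lincomb_dens a d1 d2 x < 0" using diff[OF xg] by simp
  qed
  have X0: "x0 = - a * (d1 + d2)" by (simp add: x0_def)
  have L: "x0 < x0 + s1" "x0 + s1 < x0 + s2" using ss by auto
  show ?thesis
    by (rule exI[of _ x0], rule exI[of _ "x0 + s1"], rule exI[of _ "x0 + s2"]) (use P1 P2 X0 L in blast)
qed

theorem lemma14:
  fixes \<alpha> d1 d2 :: real
  assumes "0 < \<alpha>" "\<alpha> \<le> 1/2" "0 \<le> d1" "0 \<le> d2" "d1 \<noteq> d2"
  defines "c \<equiv> sqrt ((d1^2 + d2^2) / 2)"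
  defines "fU \<equiv> lincomb_dens \<alpha> d1 d2"
      and "fV \<equiv> lincomb_dens \<alpha> c c"
  shows "\<exists>x0 x1 x2. x0 < x1 \<and> x1 < x2 \<and> x0 = - \<alpha> * (d1 + d2) \<and>
     (\<forall>x \<in> {- \<alpha> * sqrt (2 * (d1^2 + d2^2)) <..< x0} \<union> {x1 <..< x2}. fV x - fU x > 0) \<and>
     (\<forall>x \<in> {x0 <..< x1} \<union> {x2 <..}. fV x - fU x < 0)"
proof (cases "d1 < d2")
  case True
  show ?thesis
    using core[OF assms(1,2,3) True] unfolding fU_def fV_def c_def .
next
  case False
  then have lt: "d2 < d1" using assms(5) by simp
  have e1: "d2^2 + d1^2 = d1^2 + d2^2" by simp
  have e2: "d2 + d1 = d1 + d2" by simp
  show ?thesis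
    using core[OF assms(1,2,4) lt] unfolding fU_def fV_def c_def e1 e2 lincomb_sym[of \<alpha> d2 d1] .
qed

end
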